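(* Let $(\mathcal A;\mathcal E)$ be an exact category and let $\mathcal J_1,\mathcal J_2$ be special preenveloping ideals of $\mathcal A$. Then $\mathcal J_1\cap\mathcal J_2$ is a special preenveloping ideal. Moreover, if $B\in\mathcal A$, $m^1:B\to C^1$ is a special $\mathcal J_1$-preenvelope of $B$ and $m^2:B\to C^2$ is a special $\mathcal J_2$-preenvelope of $B$, then the pushout $m^1\amalg_B m^2: B\to C^1\amalg_B C^2$ is a special $(\mathcal J_1\cap\mathcal J_2)$-preenvelope of $B$.
   Context: $(\mathcal A;\mathcal E)$ is an exact category: an additive category with a class $\mathcal E$ of kernel–cokernel pairs (conflations) $X\xrightarrow{m}Y\xrightarrow{p}Z$ ($m$ an inflation, $p$ a deflation) satisfying the Quillen–Keller axioms. $\mathrm{Ext}(A,B)$ denotes the group of (equivalence classes of) conflations $B\to C\to A$. An ideal $\mathcal J$ of $\mathcal A$ is a family of subgroups $\mathcal J(A,B)\subseteq\mathrm{Hom}(A,B)$ closed under composition on either side with arbitrary morphisms. For morphisms $a:A_0\to A_1$ and $b:B_0\to B_1$, let $\mathrm{Ext}(a,b):\mathrm{Ext}(A_1,B_0)\to\mathrm{Ext}(A_0,B_1)$ be the map sending a conflation to its pushout along $b$ followed by pullback along $a$ (the diagonal of the commutative square formed by $\mathrm{Ext}(A_1,b),\mathrm{Ext}(a,B_0),\mathrm{Ext}(a,B_1),\mathrm{Ext}(A_0,b)$); $a,b$ are Ext-orthogonal if $\mathrm{Ext}(a,b)=0$. For a class $\mathcal M$ of morphisms, ${}^\perp\mathcal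 M$ is the ideal of morphisms $a$ with $\mathrm{Ext}(a,m)=0$ for all $m\in\mathcal M$. A special $\mathcal J$-preenvelope of an object $B$ is a morphism $j:B\to C_0$ in $\mathcal J$ for which there exist conflations $B\xrightarrow{j}C_0\to A_0$ and $B\to C_1\to A_1$ and a morphism of conflations between them with components $1_B$, some $c:C_0\to C_1$, and some $a:A_0\to A_1$ with $a\in{}^\perp\mathcal J$. The ideal $\mathcal J$ is special preenveloping if every object of $\mathcal A$ has a special $\mathcal J$-preenvelope. *)

theory Defs
  imports Main
begin

record ('o, 'm) addcat =
  cObj  :: "'o set"
  cMor  :: "'m set"
  src   :: "'m \<Rightarrow> 'o"
  tgt   :: "'m \<Rightarrow> 'o"
  ident :: "'o \<Rightarrow> 'm"
  cmp   :: "'m \<Rightarrow> 'm \<Rightarrow> 'm"   (* cmp C g f = g \<circ> f *)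
  madd  :: "'m \<Rightarrow> 'm \<Rightarrow> 'm"
  mzero :: "'o \<Rightarrow> 'o \<Rightarrow> 'm"
  mneg  :: "'m \<Rightarrow> 'm"

definition Hom :: "('o,'m) addcat \<Rightarrow> 'o \<Rightarrow> 'o \<Rightarrow> 'm set" where
  "Hom C A B = {f \<in> cMor C. src C f = A \<and> tgt C f = B}"

definition category :: "('o,'m) addcat \<Rightarrow> bool" where
  "category C \<longleftrightarrow>
     (\<forall>f\<in>cMor C. src C f \<in> cObj C \<and> tgt C f \<in> cObj C) \<and>
     (\<forall>A\<in>cObj C. ident C A \<in> Hom C A A) \<and>
     (\<forall>f\<in>cMor C. \<forall>g\<in>cMor C. tgt C f = src C g \<longrightarrow>
         cmp C g f \<in> Hom C (src C f) (tgt C g)) \<and>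
     (\<forall>f\<in>cMor C. cmp C f (ident C (src C f)) = f \<and> cmp C (ident C (tgt C f)) f = f) \<and>
     (\<forall>f\<in>cMor C. \<forall>g\<in>cMor C. \<forall>h\<in>cMor C. tgt C f = src C g \<and> tgt C g = src C h \<longrightarrow>
         cmp C h (cmp C g f) = cmp C (cmp C h g) f)"

definition preadditive :: "('o,'m) addcat \<Rightarrow> bool" where
  "preadditive C \<longleftrightarrow> category C \<and>
     (\<forall>A\<in>cObj C. \<forall>B\<in>cObj C.
        mzero C A B \<in> Hom C A B \<and>
        (\<forall>f\<in>Hom C A B. \<forall>g\<in>Hom C A B. madd C f g \<in> Hom C A B \<and> madd C f g = madd C g f) \<and>
        (\<forall>f\<in>Hom C A B. \<forall>g\<in>Hom C A B. \<forall>h\<in>Hom C A B.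
            madd C (madd C f g) h = madd C f (madd C g h)) \<and>
        (\<forall>f\<in>Hom C A B. madd C f (mzero C A B) = f \<and> mneg C f \<in> Hom C A B \<and>
            madd C f (mneg C f) = mzero C A B)) \<and>
     (\<forall>f\<in>cMor C. \<forall>g\<in>Hom C (src C f) (tgt C f). \<forall>h\<in>cMor C. src C h = tgt C f \<longrightarrow>
         cmp C h (madd C f g) = madd C (cmp C h f) (cmp C h g)) \<and>
     (\<forall>f\<in>cMor C. \<forall>g\<in>Hom C (src C f) (tgt C f). \<forall>k\<in>cMor C. tgt C k = src C f \<longrightarrow>
         cmp C (madd C f g) k = madd C (cmp C f k) (cmp C g k))"

definition additive :: "('o,'m) addcat \<Rightarrow> bool" where
  "additive C \<longleftrightarrow> preadditive C \<and>
     (\<exists>Z\<in>cObj C. \<forall>A\<in>cObj C. Hom C Z A = {mzero C Z A} \<and> Hom C A Z = {mzero C A Z}) \<and>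
     (\<forall>A\<in>cObj C. \<forall>B\<in>cObj C. \<exists>S i1 i2 p1 p2.
        S \<in> cObj C \<and> i1 \<in> Hom C A S \<and> i2 \<in> Hom C B S \<and> p1 \<in> Hom C S A \<and> p2 \<in> Hom C S B \<and>
        cmp C p1 i1 = ident C A \<and> cmp C p2 i2 = ident C B \<and>
        cmp C p2 i1 = mzero C A B \<and> cmp C p1 i2 = mzero C B A \<and>
        madd C (cmp C i1 p1) (cmp C i2 p2) = ident C S)"

definition iso :: "('o,'m) addcat \<Rightarrow> 'm \<Rightarrow> bool" where
  "iso C f \<longleftrightarrow> f \<in> cMor C \<and> (\<exists>g\<in>Hom C (tgt C f) (src C f).
      cmp C g f = ident C (src C f) \<and> cmp C f g = ident C (tgt C f))"

definition is_pushout :: "('o,'m) addcat \<Rightarrow> 'm \<Rightarrow> 'm \<Rightarrow> 'm \<Rightarrow> 'm \<Rightarrow> bool" where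
  "is_pushout C f g u v \<longleftrightarrow>
     f \<in> cMor C \<and> g \<in> cMor C \<and> u \<in> cMor C \<and> v \<in> cMor C \<and>
     src C f = src C g \<and> src C u = tgt C f \<and> src C v = tgt C g \<and> tgt C u = tgt C v \<and>
     cmp C u f = cmp C v g \<and>
     (\<forall>y\<in>cMor C. \<forall>z\<in>cMor C. src C y = tgt C f \<and> src C z = tgt C g \<and> tgt C y = tgt C z \<and>
        cmp C y f = cmp C z g \<longrightarrow>
        (\<exists>!h. h \<in> Hom C (tgt C u) (tgt C y) \<and> cmp C h u = y \<and> cmp C h v = z))"

definition is_pullback :: "('o,'m) addcat \<Rightarrow> 'm \<Rightarrow> 'm \<Rightarrow> 'm \<Rightarrow> 'm \<Rightarrow> bool" where
  "is_pullback C d q p a \<longleftrightarrow>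
     d \<in> cMor C \<and> q \<in> cMor C \<and> p \<in> cMor C \<and> a \<in> cMor C \<and>
     src C d = src C q \<and> tgt C d = src C p \<and> tgt C q = src C a \<and> tgt C p = tgt C a \<and>
     cmp C p d = cmp C a q \<and>
     (\<forall>y\<in>cMor C. \<forall>z\<in>cMor C. tgt C y = src C p \<and> tgt C z = src C a \<and> src C y = src C z \<and>
        cmp C p y = cmp C a z \<longrightarrow>
        (\<exists>!h. h \<in> Hom C (src C y) (src C d) \<and> cmp C d h = y \<and> cmp C q h = z))"

section \<open>Exact categories (Quillen--Keller axioms, as in Buehler)\<close>

definition is_kernel :: "('o,'m) addcat \<Rightarrow> 'm \<Rightarrow> 'm \<Rightarrow> bool" where
  "is_kernel C i p \<longleftrightarrow> i \<in> cMor C \<and> p \<in> cMor C \<and> tgt C i = src C p \<and>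
     cmp C p i = mzero C (src C i) (tgt C p) \<and>
     (\<forall>f\<in>cMor C. tgt C f = src C p \<and> cmp C p f = mzero C (src C f) (tgt C p) \<longrightarrow>
        (\<exists>!g. g \<in> Hom C (src C f) (src C i) \<and> cmp C i g = f))"

definition is_cokernel :: "('o,'m) addcat \<Rightarrow> 'm \<Rightarrow> 'm \<Rightarrow> bool" where
  "is_cokernel C p i \<longleftrightarrow> i \<in> cMor C \<and> p \<in> cMor C \<and> tgt C i = src C p \<and>
     cmp C p i = mzero C (src C i) (tgt C p) \<and>
     (\<forall>f\<in>cMor C. src C f = tgt C i \<and> cmp C f i = mzero C (src C i) (tgt C f) \<longrightarrow>
        (\<exists>!g. g \<in> Hom C (tgt C p) (tgt C f) \<and> cmp C g p = f))"

definition kc_pair :: "('o,'m) addcat \<Rightarrow> 'm \<Rightarrow> 'm \<Rightarrow> bool" where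
  "kc_pair C i p \<longleftrightarrow> is_kernel C i p \<and> is_cokernel C p i"

definition inflation :: "('m \<times> 'm) set \<Rightarrow> 'm \<Rightarrow> bool" where
  "inflation E i \<longleftrightarrow> (\<exists>p. (i, p) \<in> E)"

definition deflation :: "('m \<times> 'm) set \<Rightarrow> 'm \<Rightarrow> bool" where
  "deflation E p \<longleftrightarrow> (\<exists>i. (i, p) \<in> E)"

definition exact_category :: "('o,'m) addcat \<Rightarrow> ('m \<times> 'm) set \<Rightarrow> bool" where
  "exact_category C E \<longleftrightarrow> additive C \<and>
     (\<forall>(i, p)\<in>E. kc_pair C i p) \<and>
     \<comment> \<open>closed under isomorphisms of kernel-cokernel pairs\<close>
     (\<forall>(i, p)\<in>E. \<forall>i' p' f g h. i' \<in> cMor C \<and> p' \<in> cMor C \<and> tgt C i' = src C p' \<and>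
        f \<in> Hom C (src C i') (src C i) \<and> g \<in> Hom C (tgt C i') (tgt C i) \<and>
        h \<in> Hom C (tgt C p') (tgt C p) \<and> iso C f \<and> iso C g \<and> iso C h \<and>
        cmp C g i' = cmp C i f \<and> cmp C h p' = cmp C p g \<longrightarrow> (i', p') \<in> E) \<and>
     \<comment> \<open>[E0], [E0op]\<close>
     (\<forall>A\<in>cObj C. inflation E (ident C A) \<and> deflation E (ident C A)) \<and>
     \<comment> \<open>[E1], [E1op]\<close>
     (\<forall>i j. inflation E i \<and> inflation E j \<and> tgt C i = src C j \<longrightarrow> inflation E (cmp C j i)) \<and>
     (\<forall>p q. deflation E p \<and> deflation E q \<and> tgt C p = src C q \<longrightarrow> deflation E (cmp C q p)) \<and>
     \<comment> \<open>[E2]: pushouts of inflations exist and are inflations\<close>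
     (\<forall>i f. inflation E i \<and> f \<in> cMor C \<and> src C f = src C i \<longrightarrow>
        (\<exists>u v. is_pushout C i f u v \<and> inflation E v)) \<and>
     \<comment> \<open>[E2op]: pullbacks of deflations exist and are deflations\<close>
     (\<forall>p a. deflation E p \<and> a \<in> cMor C \<and> tgt C a = tgt C p \<longrightarrow>
        (\<exists>d q. is_pullback C d q p a \<and> deflation E q))"

text \<open>A conflation B -m-> C -p-> A is split (represents 0 in Ext(A,B)) iff m has a retraction.\<close>
definition split_confl :: "('o,'m) addcat \<Rightarrow> 'm \<Rightarrow> 'm \<Rightarrow> bool" where
  "split_confl C m p \<longleftrightarrow> (\<exists>r \<in> Hom C (tgt C m) (src C m). cmp C r m = ident C (src C m))"

text \<open>(m',p') is the pushout of the conflation (m,p) along b (Ext(A,b)).\<close>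
definition confl_pushout :: "('o,'m) addcat \<Rightarrow> ('m \<times> 'm) set \<Rightarrow> 'm \<Rightarrow> 'm \<Rightarrow> 'm \<Rightarrow> 'm \<Rightarrow> 'm \<Rightarrow> bool" where
  "confl_pushout C E m p b m' p' \<longleftrightarrow> (m', p') \<in> E \<and> src C m' = tgt C b \<and> tgt C p' = tgt C p \<and>
     (\<exists>c \<in> Hom C (tgt C m) (tgt C m'). is_pushout C m b c m' \<and> cmp C p' c = p)"

text \<open>(m',p') is the pullback of the conflation (m,p) along a (Ext(a,B)).\<close>
definition confl_pullback :: "('o,'m) addcat \<Rightarrow> ('m \<times> 'm) set \<Rightarrow> 'm \<Rightarrow> 'm \<Rightarrow> 'm \<Rightarrow> 'm \<Rightarrow> 'm \<Rightarrow> bool" where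
  "confl_pullback C E m p a m' p' \<longleftrightarrow> (m', p') \<in> E \<and> src C m' = src C m \<and> tgt C p' = src C a \<and>
     (\<exists>d \<in> Hom C (tgt C m') (tgt C m). is_pullback C d p' p a \<and> cmp C d m' = m)"

text \<open>Ext(a,b) = 0 for a : A0 -> A1, b : B0 -> B1: every conflation in Ext(A1,B0),
  pushed out along b and then pulled back along a, splits.\<close>
definition ext_orth :: "('o,'m) addcat \<Rightarrow> ('m \<times> 'm) set \<Rightarrow> 'm \<Rightarrow> 'm \<Rightarrow> bool" where
  "ext_orth C E a b \<longleftrightarrow> a \<in> cMor C \<and> b \<in> cMor C \<and>
     (\<forall>m p m1 p1 m2 p2. (m, p) \<in> E \<and> src C m = src C b \<and> tgt C p = tgt C a \<and>
        confl_pushout C E m p b m1 p1 \<and> confl_pullback C E m1 p1 a m2 p2 \<longrightarrow>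
        split_confl C m2 p2)"

definition perp_ideal :: "('o,'m) addcat \<Rightarrow> ('m \<times> 'm) set \<Rightarrow> 'm set \<Rightarrow> 'm set" where
  "perp_ideal C E M = {a \<in> cMor C. \<forall>m\<in>M. ext_orth C E a m}"

definition ideal :: "('o,'m) addcat \<Rightarrow> 'm set \<Rightarrow> bool" where
  "ideal C J \<longleftrightarrow> J \<subseteq> cMor C \<and>
     (\<forall>A\<in>cObj C. \<forall>B\<in>cObj C. mzero C A B \<in> J \<and>
        (\<forall>f\<in>J \<inter> Hom C A B. mneg C f \<in> J \<and> (\<forall>g\<in>J \<inter> Hom C A B. madd C f g \<in> J))) \<and>
     (\<forall>f\<in>J. \<forall>g\<in>cMor C. (tgt C f = src C g \<longrightarrow> cmp C g f \<in> J) \<and>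
                         (src C f = tgt C g \<longrightarrow> cmp C f g \<in> J))"

definition special_preenvelope ::
  "('o,'m) addcat \<Rightarrow> ('m \<times> 'm) set \<Rightarrow> 'm set \<Rightarrow> 'o \<Rightarrow> 'm \<Rightarrow> bool" where
  "special_preenvelope C E J B j \<longleftrightarrow> B \<in> cObj C \<and> j \<in> J \<and> src C j = B \<and>
     (\<exists>q0 i1 q1 c a. (j, q0) \<in> E \<and> (i1, q1) \<in> E \<and> src C i1 = B \<and>
        c \<in> Hom C (tgt C j) (tgt C i1) \<and> a \<in> Hom C (tgt C q0) (tgt C q1) \<and>
        cmp C c j = cmp C i1 (ident C B) \<and> cmp C q1 c = cmp C a q0 \<and>
        a \<in> perp_ideal C E J)"

definition special_preenveloping :: "('o,'m) addcat \<Rightarrow> ('m \<times> 'm) set \<Rightarrow> 'm set \<Rightarrow> bool" where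
  "special_preenveloping C E J \<longleftrightarrow> (\<forall>B\<in>cObj C. \<exists>j. special_preenvelope C E J B j)"

end

theory Submission
  imports Defs
begin

locale ec =
  fixes C :: "('o,'m) addcat" and E :: "('m \<times> 'm) set"
  assumes ex: "exact_category C E"
begin

abbreviation comp (infixr "\<cdot>" 70) where "g \<cdot> f \<equiv> cmp C g f"
abbreviation add (infixl "\<oplus>" 65) where "f \<oplus> g \<equiv> madd C f g"
abbreviation Z where "Z A B \<equiv> mzero C A B"
abbreviation ng where "ng f \<equiv> mneg C f"
abbreviation H where "H A B \<equiv> Hom C A B"
abbreviation Ob where "Ob \<equiv> cObj C"

lemma addi: "additive C" using ex unfolding exact_category_def by auto
lemma pre: "preadditive C" using addi unfolding additive_def by auto
lemma cat: "category C" using pre unfolding preadditive_def by auto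

lemma homD: "f \<in> H A B \<Longrightarrow> f \<in> cMor C \<and> src C f = A \<and> tgt C f = B"
  by (simp add: Hom_def)
lemma homI: "f \<in> cMor C \<Longrightarrow> f \<in> H (src C f) (tgt C f)"
  by (simp add: Hom_def)

lemma hom_obj: "f \<in> H A B \<Longrightarrow> A \<in> Ob \<and> B \<in> Ob"
  using cat unfolding category_def Hom_def by auto

lemma comp_hom[intro]: "f \<in> H A B \<Longrightarrow> g \<in> H B D \<Longrightarrow> g \<cdot> f \<in> H A D"
  using cat unfolding category_def Hom_def by auto

lemma id_hom[intro]: "A \<in> Ob \<Longrightarrow> ident C A \<in> H A A"
  using cat unfolding category_def by auto

lemma id_l[simp]: "f \<in> H A B \<Longrightarrow> ident C B \<cdot> f = f"
  using cat unfolding category_def Hom_def by auto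
lemma id_r[simp]: "f \<in> H A B \<Longrightarrow> f \<cdot> ident C A = f"
  using cat unfolding category_def Hom_def by auto

lemma assoc: "f \<in> H A B \<Longrightarrow> g \<in> H B D \<Longrightarrow> h \<in> H D F \<Longrightarrow> h \<cdot> (g \<cdot> f) = (h \<cdot> g) \<cdot> f"
  using cat unfolding category_def Hom_def by auto

lemma preAB: assumes "A \<in> Ob" "B \<in> Ob"
  shows "mzero C A B \<in> Hom C A B \<and>
        (\<forall>f\<in>Hom C A B. \<forall>g\<in>Hom C A B. madd C f g \<in> Hom C A B \<and> madd C f g = madd C g f) \<and>
        (\<forall>f\<in>Hom C A B. \<forall>g\<in>Hom C A B. \<forall>h\<in>Hom C A B.
            madd C (madd C f g) h = madd C f (madd C g h)) \<and>
        (\<forall>f\<in>Hom C A B. madd C f (mzero C A B) = f \<and> mneg C f \<in> Hom C A B \<and>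
            madd C f (mneg C f) = mzero C A B)"
proof -
  have all: "\<forall>A\<in>Ob. \<forall>B\<in>Ob.
        mzero C A B \<in> Hom C A B \<and>
        (\<forall>f\<in>Hom C A B. \<forall>g\<in>Hom C A B. madd C f g \<in> Hom C A B \<and> madd C f g = madd C g f) \<and>
        (\<forall>f\<in>Hom C A B. \<forall>g\<in>Hom C A B. \<forall>h\<in>Hom C A B.
            madd C (madd C f g) h = madd C f (madd C g h)) \<and>
        (\<forall>f\<in>Hom C A B. madd C f (mzero C A B) = f \<and> mneg C f \<in> Hom C A B \<and>
            madd C f (mneg C f) = mzero C A B)"
    using pre unfolding preadditive_def by (rule conjunct1[OF conjunct2])
  show ?thesis using bspec[OF bspec[OF all assms(1)] assms(2)] .
qed

lemma zero_hom[intro]: "A \<in> Ob \<Longrightarrow> B \<in> Ob \<Longrightarrow> Z A B \<in> H A B"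
  using preAB by simp
lemma add_hom[intro]: assumes "f \<in> H A B" "g \<in> H A B" shows "f \<oplus> g \<in> H A B"
  using preAB[OF hom_obj[OF assms(1), THEN conjunct1] hom_obj[OF assms(1), THEN conjunct2]] assms by blast
lemma add_comm: assumes "f \<in> H A B" "g \<in> H A B" shows "f \<oplus> g = g \<oplus> f"
  using preAB[OF hom_obj[OF assms(1), THEN conjunct1] hom_obj[OF assms(1), THEN conjunct2]] assms by blast
lemma add_assoc: assumes "f \<in> H A B" "g \<in> H A B" "h \<in> H A B" shows "(f \<oplus> g) \<oplus> h = f \<oplus> (g \<oplus> h)"
  using preAB[OF hom_obj[OF assms(1), THEN conjunct1] hom_obj[OF assms(1), THEN conjunct2]] assms by blast
lemma add_zero[simp]: assumes "f \<in> H A B" shows "f \<oplus> Z A B = f"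
  using preAB[OF hom_obj[OF assms(1), THEN conjunct1] hom_obj[OF assms(1), THEN conjunct2]] assms by blast
lemma neg_hom[intro]: assumes "f \<in> H A B" shows "ng f \<in> H A B"
  using preAB[OF hom_obj[OF assms(1), THEN conjunct1] hom_obj[OF assms(1), THEN conjunct2]] assms by blast
lemma add_neg[simp]: assumes "f \<in> H A B" shows "f \<oplus> ng f = Z A B"
  using preAB[OF hom_obj[OF assms(1), THEN conjunct1] hom_obj[OF assms(1), THEN conjunct2]] assms by blast

lemma distl: assumes "f \<in> H A B" "g \<in> H A B" "h \<in> H B D" shows "h \<cdot> (f \<oplus> g) = h \<cdot> f \<oplus> h \<cdot> g"
proof -
  have "\<forall>f\<in>cMor C. \<forall>g\<in>Hom C (src C f) (tgt C f). \<forall>h\<in>cMor C. src C h = tgt C f \<longrightarrow>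
         cmp C h (madd C f g) = madd C (cmp C h f) (cmp C h g)"
    using pre unfolding preadditive_def by (rule conjunct1[OF conjunct2[OF conjunct2]])
  from this[rule_format, of f g h] assms show ?thesis by (simp add: Hom_def)
qed
lemma distr: assumes "f \<in> H A B" "g \<in> H A B" "k \<in> H D A" shows "(f \<oplus> g) \<cdot> k = f \<cdot> k \<oplus> g \<cdot> k"
proof -
  have "\<forall>f\<in>cMor C. \<forall>g\<in>Hom C (src C f) (tgt C f). \<forall>k\<in>cMor C. tgt C k = src C f \<longrightarrow>
         cmp C (madd C f g) k = madd C (cmp C f k) (cmp C g k)"
    using pre unfolding preadditive_def by (rule conjunct2[OF conjunct2[OF conjunct2]])
  from this[rule_format, of f g k] assms show ?thesis by (simp add: Hom_def)
qed

lemma zero_add[simp]: assumes "f \<in> H A B" shows "Z A B \<oplus> f = f"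
proof -
  have ob: "A \<in> Ob" "B \<in> Ob" using hom_obj[OF assms(1)] by auto
  have "Z A B \<oplus> f = f \<oplus> Z A B" by (rule add_comm[OF zero_hom[OF ob] assms])
  then show ?thesis using add_zero[OF assms] by simp
qed

lemma cancel_zero: assumes "z \<in> H A B" "z \<oplus> z = z" shows "z = Z A B"
proof -
  have "z = z \<oplus> (z \<oplus> ng z)" using add_neg[OF assms(1)] add_zero[OF assms(1)] by simp
  also have "\<dots> = (z \<oplus> z) \<oplus> ng z" using add_assoc[OF assms(1) assms(1) neg_hom[OF assms(1)]] by simp
  also have "\<dots> = Z A B" using assms(2) add_neg[OF assms(1)] by simp
  finally show ?thesis .
qed

lemma zero_l[simp]: assumes "f \<in> H A B" "D \<in> Ob" shows "Z B D \<cdot> f = Z A D"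
proof -
  have ob: "A \<in> Ob" "B \<in> Ob" using hom_obj[OF assms(1)] by auto
  have z: "Z B D \<in> H B D" using ob assms by auto
  have "Z B D \<cdot> f = (Z B D \<oplus> Z B D) \<cdot> f" using z by simp
  also have "\<dots> = Z B D \<cdot> f \<oplus> Z B D \<cdot> f" using distr[OF z z assms(1)] .
  finally show ?thesis using cancel_zero[of "Z B D \<cdot> f" A D] z assms by auto
qed

lemma zero_r[simp]: assumes "g \<in> H B D" "A \<in> Ob" shows "g \<cdot> Z A B = Z A D"
proof -
  have ob: "B \<in> Ob" "D \<in> Ob" using hom_obj[OF assms(1)] by auto
  have z: "Z A B \<in> H A B" using ob assms by auto
  have "g \<cdot> Z A B = g \<cdot> (Z A B \<oplus> Z A B)" using z by simp
  also have "\<dots> = g \<cdot> Z A B \<oplus> g \<cdot> Z A B" using distl[OF z z assms(1)] .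
  finally show ?thesis using cancel_zero[of "g \<cdot> Z A B" A D] z assms by auto
qed

lemma neg_unique: assumes "x \<in> H A B" "y \<in> H A B" "x \<oplus> y = Z A B" shows "y = ng x"
proof -
  have "y = y \<oplus> (x \<oplus> ng x)" using add_neg[OF assms(1)] add_zero[OF assms(2)] by simp
  also have "\<dots> = (y \<oplus> x) \<oplus> ng x" using add_assoc[OF assms(2) assms(1) neg_hom[OF assms(1)]] by simp
  also have "\<dots> = ng x" using assms(3) add_comm[OF assms(1) assms(2)] zero_add[OF neg_hom[OF assms(1)]] by simp
  finally show ?thesis .
qed

lemma comp_neg_l: assumes "x \<in> H A B" "p \<in> H B D" shows "p \<cdot> ng x = ng (p \<cdot> x)"
proof -
  have ob: "A \<in> Ob" using hom_obj[OF assms(1)] by auto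
  have "p \<cdot> x \<oplus> p \<cdot> ng x = p \<cdot> (x \<oplus> ng x)" using distl[OF assms(1) neg_hom[OF assms(1)] assms(2)] by simp
  also have "\<dots> = Z A D" using add_neg[OF assms(1)] zero_r[OF assms(2) ob] by simp
  finally show ?thesis using neg_unique[of "p \<cdot> x" A D "p \<cdot> ng x"] comp_hom[OF assms(1) assms(2)]
      comp_hom[OF neg_hom[OF assms(1)] assms(2)] by auto
qed

lemma comp_neg_r: assumes "x \<in> H A B" "k \<in> H D A" shows "ng x \<cdot> k = ng (x \<cdot> k)"
proof -
  have ob: "B \<in> Ob" using hom_obj[OF assms(1)] by auto
  have "x \<cdot> k \<oplus> ng x \<cdot> k = (x \<oplus> ng x) \<cdot> k" using distr[OF assms(1) neg_hom[OF assms(1)] assms(2)] by simp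
  also have "\<dots> = Z D B" using add_neg[OF assms(1)] zero_l[OF assms(2) ob] by simp
  finally show ?thesis using neg_unique[of "x \<cdot> k" D B "ng x \<cdot> k"] comp_hom[OF assms(2) assms(1)]
      comp_hom[OF assms(2) neg_hom[OF assms(1)]] by auto
qed

lemma neg_zero[simp]: assumes "A \<in> Ob" "B \<in> Ob" shows "ng (Z A B) = Z A B"
  using neg_unique[of "Z A B" A B "Z A B"] zero_hom[OF assms] add_zero[OF zero_hom[OF assms]] by auto

lemma add_neg_cancel: assumes "x \<in> H A B" "y \<in> H A B" shows "(x \<oplus> ng y) \<oplus> y = x"
  using assms by (simp add: add_assoc add_comm[of "ng y" A B y] neg_hom)

end

context ec
begin

lemma conf_kc: "(i,p) \<in> E \<Longrightarrow> kc_pair C i p"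
  using ex unfolding exact_category_def by auto

lemma conf_i: "(i,p) \<in> E \<Longrightarrow> i \<in> H (src C i) (tgt C i)"
  using conf_kc unfolding kc_pair_def is_kernel_def Hom_def by auto
lemma conf_p: "(i,p) \<in> E \<Longrightarrow> p \<in> H (tgt C i) (tgt C p)"
  using conf_kc unfolding kc_pair_def is_kernel_def Hom_def by auto
lemma conf_zero: "(i,p) \<in> E \<Longrightarrow> p \<cdot> i = Z (src C i) (tgt C p)"
  using conf_kc unfolding kc_pair_def is_kernel_def by auto

lemma ker_univ: "is_kernel C i p \<Longrightarrow> f \<in> cMor C \<Longrightarrow> tgt C f = src C p \<Longrightarrow>
   p \<cdot> f = Z (src C f) (tgt C p) \<Longrightarrow> \<exists>!g. g \<in> H (src C f) (src C i) \<and> i \<cdot> g = f"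
  unfolding is_kernel_def by blast

lemma cok_univ: "is_cokernel C p i \<Longrightarrow> f \<in> cMor C \<Longrightarrow> src C f = tgt C i \<Longrightarrow>
   f \<cdot> i = Z (src C i) (tgt C f) \<Longrightarrow> \<exists>!g. g \<in> H (tgt C p) (tgt C f) \<and> g \<cdot> p = f"
  unfolding is_cokernel_def by blast

lemma ex1_same: "\<exists>!x. P x \<Longrightarrow> P a \<Longrightarrow> P b \<Longrightarrow> a = b"
  by blast

lemma conf_mono:
  assumes "(i,p) \<in> E" "g \<in> H X (src C i)" "h \<in> H X (src C i)" "i \<cdot> g = i \<cdot> h"
  shows "g = h"
proof -
  have k: "is_kernel C i p" using conf_kc[OF assms(1)] unfolding kc_pair_def by simp
  have ip: "i \<in> H (src C i) (tgt C i)" "p \<in> H (tgt C i) (tgt C p)" using conf_i[OF assms(1)] conf_p[OF assms(1)] by simp_all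
  have ob: "tgt C p \<in> Ob" using hom_obj[OF ip(2)] by simp
  have f: "i \<cdot> g \<in> H X (tgt C i)" using comp_hom[OF assms(2) ip(1)] .
  have "p \<cdot> (i \<cdot> g) = (p \<cdot> i) \<cdot> g" using assoc[OF assms(2) ip] by simp
  also have "\<dots> = Z X (tgt C p)" using conf_zero[OF assms(1)] zero_l[OF assms(2) ob] by simp
  finally have pz: "p \<cdot> (i \<cdot> g) = Z X (tgt C p)" .
  have fd: "i \<cdot> g \<in> cMor C" "src C (i \<cdot> g) = X" "tgt C (i \<cdot> g) = src C p"
    using homD[OF f] homD[OF ip(2)] by simp_all
  have "\<exists>!g'. g' \<in> H X (src C i) \<and> i \<cdot> g' = i \<cdot> g"
    using ker_univ[OF k fd(1) fd(3)] pz fd(2) by simp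
  from ex1_same[OF this conjI[OF assms(2) refl] conjI[OF assms(3) assms(4)[symmetric]]] show ?thesis .
qed

lemma conf_kfac:
  assumes "(i,p) \<in> E" "f \<in> H X (tgt C i)" "p \<cdot> f = Z X (tgt C p)"
  shows "\<exists>g \<in> H X (src C i). i \<cdot> g = f"
proof -
  have k: "is_kernel C i p" using conf_kc[OF assms(1)] unfolding kc_pair_def by simp
  have ip: "p \<in> H (tgt C i) (tgt C p)" using conf_p[OF assms(1)] by auto
  have fd: "f \<in> cMor C" "src C f = X" "tgt C f = src C p"
    using homD[OF assms(2)] homD[OF ip] by simp_all
  have "\<exists>!g'. g' \<in> H X (src C i) \<and> i \<cdot> g' = f"
    using ker_univ[OF k fd(1) fd(3)] assms(3) fd(2) by simp
  then show ?thesis by (auto dest: ex1_implies_ex)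
qed

lemma conf_epi:
  assumes "(i,p) \<in> E" "g \<in> H (tgt C p) Y" "h \<in> H (tgt C p) Y" "g \<cdot> p = h \<cdot> p"
  shows "g = h"
proof -
  have k: "is_cokernel C p i" using conf_kc[OF assms(1)] unfolding kc_pair_def by simp
  have ip: "i \<in> H (src C i) (tgt C i)" "p \<in> H (tgt C i) (tgt C p)" using conf_i[OF assms(1)] conf_p[OF assms(1)] by simp_all
  have ob: "src C i \<in> Ob" using hom_obj[OF ip(1)] by simp
  have f: "g \<cdot> p \<in> H (tgt C i) Y" using comp_hom[OF ip(2) assms(2)] .
  have "(g \<cdot> p) \<cdot> i = g \<cdot> (p \<cdot> i)" using assoc[OF ip assms(2)] by simp
  also have "\<dots> = Z (src C i) Y" using conf_zero[OF assms(1)] zero_r[OF assms(2) ob] by simp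
  finally have pz: "(g \<cdot> p) \<cdot> i = Z (src C i) Y" .
  have fd: "g \<cdot> p \<in> cMor C" "src C (g \<cdot> p) = tgt C i" "tgt C (g \<cdot> p) = Y"
    using homD[OF f] by simp_all
  have "\<exists>!g'. g' \<in> H (tgt C p) Y \<and> g' \<cdot> p = g \<cdot> p"
    using cok_univ[OF k fd(1) fd(2)] pz fd(3) by simp
  from ex1_same[OF this conjI[OF assms(2) refl] conjI[OF assms(3) assms(4)[symmetric]]] show ?thesis .
qed

lemma conf_cfac:
  assumes "(i,p) \<in> E" "f \<in> H (tgt C i) Y" "f \<cdot> i = Z (src C i) Y"
  shows "\<exists>g \<in> H (tgt C p) Y. g \<cdot> p = f"
proof -
  have k: "is_cokernel C p i" using conf_kc[OF assms(1)] unfolding kc_pair_def by simp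
  have fd: "f \<in> cMor C" "src C f = tgt C i" "tgt C f = Y"
    using homD[OF assms(2)] by simp_all
  have "\<exists>!g'. g' \<in> H (tgt C p) Y \<and> g' \<cdot> p = f"
    using cok_univ[OF k fd(1) fd(2)] assms(3) fd(3) by simp
  then show ?thesis by (auto dest: ex1_implies_ex)
qed

lemma isoI: assumes "f \<in> H A B" "k \<in> H B A" "k \<cdot> f = ident C A" "f \<cdot> k = ident C B"
  shows "iso C f"
  using assms unfolding iso_def Hom_def by auto

lemma iso_id: assumes "A \<in> Ob" shows "iso C (ident C A)"
  using isoI[OF id_hom[OF assms] id_hom[OF assms] id_l[OF id_hom[OF assms]] id_l[OF id_hom[OF assms]]] .

lemma E_iso:
  assumes "(i,p) \<in> E" "i' \<in> H A' B'" "p' \<in> H B' D'" "f \<in> H A' (src C i)" "g \<in> H B' (tgt C i)"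
    "h \<in> H D' (tgt C p)" "iso C f" "iso C g" "iso C h" "g \<cdot> i' = i \<cdot> f" "h \<cdot> p' = p \<cdot> g"
  shows "(i', p') \<in> E"
proof -
  have "\<forall>(i, p)\<in>E. \<forall>i' p' f g h. i' \<in> cMor C \<and> p' \<in> cMor C \<and> tgt C i' = src C p' \<and>
        f \<in> Hom C (src C i') (src C i) \<and> g \<in> Hom C (tgt C i') (tgt C i) \<and>
        h \<in> Hom C (tgt C p') (tgt C p) \<and> iso C f \<and> iso C g \<and> iso C h \<and>
        cmp C g i' = cmp C i f \<and> cmp C h p' = cmp C p g \<longrightarrow> (i', p') \<in> E"
    using ex unfolding exact_category_def by blast
  then have "\<forall>i' p' f g h. i' \<in> cMor C \<and> p' \<in> cMor C \<and> tgt C i' = src C p' \<and>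
        f \<in> Hom C (src C i') (src C i) \<and> g \<in> Hom C (tgt C i') (tgt C i) \<and>
        h \<in> Hom C (tgt C p') (tgt C p) \<and> iso C f \<and> iso C g \<and> iso C h \<and>
        cmp C g i' = cmp C i f \<and> cmp C h p' = cmp C p g \<longrightarrow> (i', p') \<in> E"
    using assms(1) by blast
  then have R: "i' \<in> cMor C \<and> p' \<in> cMor C \<and> tgt C i' = src C p' \<and>
        f \<in> Hom C (src C i') (src C i) \<and> g \<in> Hom C (tgt C i') (tgt C i) \<and>
        h \<in> Hom C (tgt C p') (tgt C p) \<and> iso C f \<and> iso C g \<and> iso C h \<and>
        cmp C g i' = cmp C i f \<and> cmp C h p' = cmp C p g \<longrightarrow> (i', p') \<in> E" by blast
  have "i' \<in> cMor C \<and> p' \<in> cMor C \<and> tgt C i' = src C p' \<and>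
        f \<in> Hom C (src C i') (src C i) \<and> g \<in> Hom C (tgt C i') (tgt C i) \<and>
        h \<in> Hom C (tgt C p') (tgt C p) \<and> iso C f \<and> iso C g \<and> iso C h \<and>
        cmp C g i' = cmp C i f \<and> cmp C h p' = cmp C p g"
    using assms homD[OF assms(2)] homD[OF assms(3)] by simp
  with R show ?thesis by blast
qed

lemma po_basic: "is_pushout C f g u v \<Longrightarrow> f \<in> cMor C \<and> g \<in> cMor C \<and> u \<in> cMor C \<and> v \<in> cMor C \<and>
     src C f = src C g \<and> src C u = tgt C f \<and> src C v = tgt C g \<and> tgt C u = tgt C v \<and>
     cmp C u f = cmp C v g"
  unfolding is_pushout_def by (elim conjE) (intro conjI; assumption)

lemma po_univ: "is_pushout C f g u v \<Longrightarrow> y \<in> cMor C \<Longrightarrow> z \<in> cMor C \<Longrightarrow>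
   src C y = tgt C f \<and> src C z = tgt C g \<and> tgt C y = tgt C z \<and> cmp C y f = cmp C z g \<Longrightarrow>
   (\<exists>!h. h \<in> Hom C (tgt C u) (tgt C y) \<and> cmp C h u = y \<and> cmp C h v = z)"
  unfolding is_pushout_def by blast

lemma po_data: assumes "is_pushout C f g u v"
  shows "f \<in> H (src C f) (tgt C f)" "g \<in> H (src C f) (tgt C g)" "u \<in> H (tgt C f) (tgt C u)"
    "v \<in> H (tgt C g) (tgt C u)" "u \<cdot> f = v \<cdot> g"
  using po_basic[OF assms] unfolding Hom_def by simp_all

lemma po_ex: assumes "is_pushout C f g u v" "y \<in> H (tgt C f) T" "z \<in> H (tgt C g) T" "y \<cdot> f = z \<cdot> g"
  shows "\<exists>h \<in> H (tgt C u) T. h \<cdot> u = y \<and> h \<cdot> v = z"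
proof -
  have "\<exists>!h. h \<in> Hom C (tgt C u) (tgt C y) \<and> cmp C h u = y \<and> cmp C h v = z"
    using po_univ[OF assms(1) homD[OF assms(2), THEN conjunct1] homD[OF assms(3), THEN conjunct1]]
      homD[OF assms(2)] homD[OF assms(3)] assms(4) by simp
  from ex1_implies_ex[OF this] obtain h where h: "h \<in> Hom C (tgt C u) (tgt C y) \<and> cmp C h u = y \<and> cmp C h v = z" by blast
  show ?thesis using h homD[OF assms(2)] by blast
qed

lemma po_uniq: assumes "is_pushout C f g u v" "h1 \<in> H (tgt C u) T" "h2 \<in> H (tgt C u) T"
  "h1 \<cdot> u = h2 \<cdot> u" "h1 \<cdot> v = h2 \<cdot> v"
  shows "h1 = h2"
proof -
  note d = po_data[OF assms(1)]
  have y: "h1 \<cdot> u \<in> H (tgt C f) T" and z: "h1 \<cdot> v \<in> H (tgt C g) T"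
    using comp_hom[OF d(3) assms(2)] comp_hom[OF d(4) assms(2)] by simp_all
  have "(h1 \<cdot> u) \<cdot> f = h1 \<cdot> (u \<cdot> f)" using assoc[OF d(1) d(3) assms(2)] by simp
  also have "\<dots> = h1 \<cdot> (v \<cdot> g)" using d(5) by simp
  also have "\<dots> = (h1 \<cdot> v) \<cdot> g" using assoc[OF d(2) d(4) assms(2)] by simp
  finally have e: "(h1 \<cdot> u) \<cdot> f = (h1 \<cdot> v) \<cdot> g" .
  have "\<exists>!h. h \<in> Hom C (tgt C u) (tgt C (h1 \<cdot> u)) \<and> cmp C h u = h1 \<cdot> u \<and> cmp C h v = h1 \<cdot> v"
    using po_univ[OF assms(1) homD[OF y, THEN conjunct1] homD[OF z, THEN conjunct1]] homD[OF y] homD[OF z] e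
    by simp
  then have "\<exists>!h. h \<in> H (tgt C u) T \<and> h \<cdot> u = h1 \<cdot> u \<and> h \<cdot> v = h1 \<cdot> v" using homD[OF y] by simp
  from ex1_same[OF this conjI[OF assms(2) conjI[OF refl refl]] conjI[OF assms(3) conjI[OF assms(4)[symmetric] assms(5)[symmetric]]]] show ?thesis .
qed

lemma pb_basic: "is_pullback C d q p a \<Longrightarrow> d \<in> cMor C \<and> q \<in> cMor C \<and> p \<in> cMor C \<and> a \<in> cMor C \<and>
     src C d = src C q \<and> tgt C d = src C p \<and> tgt C q = src C a \<and> tgt C p = tgt C a \<and>
     cmp C p d = cmp C a q"
  unfolding is_pullback_def by (elim conjE) (intro conjI; assumption)

lemma pb_univ: assumes "is_pullback C d q p a" "y \<in> cMor C" "z \<in> cMor C"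
   "tgt C y = src C p \<and> tgt C z = src C a \<and> src C y = src C z \<and> cmp C p y = cmp C a z"
  shows "(\<exists>!h. h \<in> Hom C (src C y) (src C d) \<and> cmp C d h = y \<and> cmp C q h = z)"
proof -
  have "\<forall>y\<in>cMor C. \<forall>z\<in>cMor C. tgt C y = src C p \<and> tgt C z = src C a \<and> src C y = src C z \<and>
        cmp C p y = cmp C a z \<longrightarrow>
        (\<exists>!h. h \<in> Hom C (src C y) (src C d) \<and> cmp C d h = y \<and> cmp C q h = z)"
    using assms(1) unfolding is_pullback_def by (elim conjE) assumption
  from this[rule_format, OF assms(2,3,4)] show ?thesis .
qed

lemma pb_data: assumes "is_pullback C d q p a"
  shows "d \<in> H (src C d) (tgt C d)" "q \<in> H (src C d) (tgt C q)" "p \<in> H (tgt C d) (tgt C p)"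
    "a \<in> H (tgt C q) (tgt C p)" "p \<cdot> d = a \<cdot> q"
  using pb_basic[OF assms] unfolding Hom_def by simp_all

lemma pb_ex: assumes "is_pullback C d q p a" "y \<in> H X (tgt C d)" "z \<in> H X (tgt C q)" "p \<cdot> y = a \<cdot> z"
  shows "\<exists>h \<in> H X (src C d). d \<cdot> h = y \<and> q \<cdot> h = z"
proof -
  note dd = pb_data[OF assms(1)]
  have c: "tgt C y = src C p \<and> tgt C z = src C a \<and> src C y = src C z \<and> cmp C p y = cmp C a z"
    using homD[OF assms(2)] homD[OF assms(3)] homD[OF dd(3)] homD[OF dd(4)] assms(4) by simp
  have "\<exists>!h. h \<in> Hom C (src C y) (src C d) \<and> cmp C d h = y \<and> cmp C q h = z"
    using pb_univ[OF assms(1) homD[OF assms(2), THEN conjunct1] homD[OF assms(3), THEN conjunct1] c] .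
  from ex1_implies_ex[OF this] obtain h where h: "h \<in> Hom C (src C y) (src C d) \<and> cmp C d h = y \<and> cmp C q h = z" by blast
  show ?thesis using h homD[OF assms(2)] by blast
qed

lemma pb_uniq: assumes "is_pullback C d q p a" "h1 \<in> H X (src C d)" "h2 \<in> H X (src C d)"
  "d \<cdot> h1 = d \<cdot> h2" "q \<cdot> h1 = q \<cdot> h2"
  shows "h1 = h2"
proof -
  note dd = pb_data[OF assms(1)]
  have y: "d \<cdot> h1 \<in> H X (tgt C d)" and z: "q \<cdot> h1 \<in> H X (tgt C q)"
    using comp_hom[OF assms(2) dd(1)] comp_hom[OF assms(2) dd(2)] by simp_all
  have "p \<cdot> (d \<cdot> h1) = (p \<cdot> d) \<cdot> h1" using assoc[OF assms(2) dd(1) dd(3)] by simp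
  also have "\<dots> = (a \<cdot> q) \<cdot> h1" using dd(5) by simp
  also have "\<dots> = a \<cdot> (q \<cdot> h1)" using assoc[OF assms(2) dd(2) dd(4)] by simp
  finally have e: "p \<cdot> (d \<cdot> h1) = a \<cdot> (q \<cdot> h1)" .
  have c: "tgt C (d \<cdot> h1) = src C p \<and> tgt C (q \<cdot> h1) = src C a \<and> src C (d \<cdot> h1) = src C (q \<cdot> h1) \<and> cmp C p (d \<cdot> h1) = cmp C a (q \<cdot> h1)"
    using homD[OF y] homD[OF z] homD[OF dd(3)] homD[OF dd(4)] e by simp
  have "\<exists>!h. h \<in> Hom C (src C (d \<cdot> h1)) (src C d) \<and> cmp C d h = d \<cdot> h1 \<and> cmp C q h = q \<cdot> h1"
    using pb_univ[OF assms(1) homD[OF y, THEN conjunct1] homD[OF z, THEN conjunct1] c] .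
  then have "\<exists>!h. h \<in> H X (src C d) \<and> d \<cdot> h = d \<cdot> h1 \<and> q \<cdot> h = q \<cdot> h1" using homD[OF y] by simp
  from ex1_same[OF this conjI[OF assms(2) conjI[OF refl refl]] conjI[OF assms(3) conjI[OF assms(4)[symmetric] assms(5)[symmetric]]]] show ?thesis .
qed

end

context ec
begin

lemma split_of_section:
  assumes mp: "(m,p) \<in> E" and s: "s \<in> H (tgt C p) (tgt C m)" and ps: "p \<cdot> s = ident C (tgt C p)"
  shows "split_confl C m p"
proof -
  define A where "A = src C m"
  define T where "T = tgt C m"
  define D where "D = tgt C p"
  have m: "m \<in> H A T" using conf_i[OF mp] unfolding A_def T_def .
  have p: "p \<in> H T D" using conf_p[OF mp] unfolding D_def T_def .
  have pm: "p \<cdot> m = Z A D" using conf_zero[OF mp] unfolding A_def D_def .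
  have s': "s \<in> H D T" using s unfolding D_def T_def .
  have ob: "A \<in> Ob" "T \<in> Ob" "D \<in> Ob" using hom_obj[OF m] hom_obj[OF p] by auto
  have idT: "ident C T \<in> H T T" using id_hom[OF ob(2)] .
  have sp: "s \<cdot> p \<in> H T T" using comp_hom[OF p s'] .
  define f where "f = ident C T \<oplus> ng (s \<cdot> p)"
  have f: "f \<in> H T T" unfolding f_def using add_hom[OF idT neg_hom[OF sp]] .
  have psp: "p \<cdot> (s \<cdot> p) = p" using assoc[OF p s' p] ps id_l[OF p] unfolding D_def by simp
  have "p \<cdot> f = p \<cdot> ident C T \<oplus> p \<cdot> ng (s \<cdot> p)" unfolding f_def using distl[OF idT neg_hom[OF sp] p] .
  also have "\<dots> = p \<oplus> ng p" using id_r[OF p] comp_neg_l[OF sp p] psp by simp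
  also have "\<dots> = Z T D" using add_neg[OF p] .
  finally have pf: "p \<cdot> f = Z T D" .
  obtain r where r: "r \<in> H T A" and mr: "m \<cdot> r = f"
    using conf_kfac[OF mp, of f T] f pf unfolding A_def T_def D_def by auto
  have spm: "(s \<cdot> p) \<cdot> m = Z A T" using assoc[OF m p s'] pm zero_r[OF s' ob(1)] by simp
  have "m \<cdot> (r \<cdot> m) = f \<cdot> m" using assoc[OF m r m] mr by simp
  also have "\<dots> = ident C T \<cdot> m \<oplus> ng (s \<cdot> p) \<cdot> m" unfolding f_def using distr[OF idT neg_hom[OF sp] m] .
  also have "\<dots> = m \<oplus> ng (Z A T)" using id_l[OF m] comp_neg_r[OF sp m] spm by simp
  also have "\<dots> = m" using neg_zero[OF ob(1) ob(2)] add_zero[OF m] by simp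
  also have "\<dots> = m \<cdot> ident C A" using id_r[OF m] by simp
  finally have "m \<cdot> (r \<cdot> m) = m \<cdot> ident C A" .
  then have "r \<cdot> m = ident C A"
    using conf_mono[OF mp comp_hom[OF m r, unfolded A_def] id_hom[OF ob(1), unfolded A_def]] unfolding A_def by simp
  then show ?thesis unfolding split_confl_def using r unfolding A_def T_def by auto
qed

lemma section_of_split:
  assumes mp: "(m,p) \<in> E" and sp: "split_confl C m p"
  shows "\<exists>s \<in> H (tgt C p) (tgt C m). p \<cdot> s = ident C (tgt C p)"
proof -
  define A where "A = src C m"
  define T where "T = tgt C m"
  define D where "D = tgt C p"
  have m: "m \<in> H A T" using conf_i[OF mp] unfolding A_def T_def .
  have p: "p \<in> H T D" using conf_p[OF mp] unfolding D_def T_def .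
  have pm: "p \<cdot> m = Z A D" using conf_zero[OF mp] unfolding A_def D_def .
  have ob: "A \<in> Ob" "T \<in> Ob" "D \<in> Ob" using hom_obj[OF m] hom_obj[OF p] by auto
  obtain r where r: "r \<in> H T A" and rm: "r \<cdot> m = ident C A"
    using sp unfolding split_confl_def A_def T_def by auto
  have idT: "ident C T \<in> H T T" using id_hom[OF ob(2)] .
  have mr: "m \<cdot> r \<in> H T T" using comp_hom[OF r m] .
  define g where "g = ident C T \<oplus> ng (m \<cdot> r)"
  have g: "g \<in> H T T" unfolding g_def using add_hom[OF idT neg_hom[OF mr]] .
  have mrm: "(m \<cdot> r) \<cdot> m = m" using assoc[OF m r m] rm id_r[OF m] by simp
  have "g \<cdot> m = ident C T \<cdot> m \<oplus> ng (m \<cdot> r) \<cdot> m" unfolding g_def using distr[OF idT neg_hom[OF mr] m] .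
  also have "\<dots> = m \<oplus> ng m" using id_l[OF m] comp_neg_r[OF mr m] mrm by simp
  also have "\<dots> = Z A T" using add_neg[OF m] .
  finally have gm: "g \<cdot> m = Z A T" .
  obtain \<sigma> where \<sigma>: "\<sigma> \<in> H D T" and \<sigma>p: "\<sigma> \<cdot> p = g"
    using conf_cfac[OF mp, of g T] g gm unfolding A_def T_def D_def by auto
  have pmr: "p \<cdot> (m \<cdot> r) = Z T D" using assoc[OF r m p] pm zero_l[OF r ob(3)] by simp
  have "(p \<cdot> \<sigma>) \<cdot> p = p \<cdot> g" using assoc[OF p \<sigma> p] \<sigma>p by simp
  also have "\<dots> = p \<cdot> ident C T \<oplus> p \<cdot> ng (m \<cdot> r)" unfolding g_def using distl[OF idT neg_hom[OF mr] p] .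
  also have "\<dots> = p \<oplus> ng (Z T D)" using id_r[OF p] comp_neg_l[OF mr p] pmr by simp
  also have "\<dots> = p" using neg_zero[OF ob(2) ob(3)] add_zero[OF p] by simp
  also have "\<dots> = ident C D \<cdot> p" using id_l[OF p] by simp
  finally have "(p \<cdot> \<sigma>) \<cdot> p = ident C D \<cdot> p" .
  then have "p \<cdot> \<sigma> = ident C D"
    using conf_epi[OF mp comp_hom[OF \<sigma> p, unfolded D_def] id_hom[OF ob(3), unfolded D_def]] unfolding D_def by simp
  then show ?thesis using \<sigma> unfolding D_def T_def by auto
qed

end

context ec
begin

lemma hsrc: "f \<in> H A B \<Longrightarrow> src C f = A" by (simp add: Hom_def)
lemma htgt: "f \<in> H A B \<Longrightarrow> tgt C f = B" by (simp add: Hom_def)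
lemma hmor: "f \<in> H A B \<Longrightarrow> f \<in> cMor C" by (simp add: Hom_def)

lemma E1: "inflation E i \<Longrightarrow> inflation E j \<Longrightarrow> tgt C i = src C j \<Longrightarrow> inflation E (j \<cdot> i)"
proof -
  have "\<forall>i j. inflation E i \<and> inflation E j \<and> tgt C i = src C j \<longrightarrow> inflation E (cmp C j i)"
    using ex unfolding exact_category_def by (elim conjE) assumption
  then show "inflation E i \<Longrightarrow> inflation E j \<Longrightarrow> tgt C i = src C j \<Longrightarrow> inflation E (j \<cdot> i)" by blast
qed

lemma E2: "inflation E i \<Longrightarrow> f \<in> cMor C \<Longrightarrow> src C f = src C i \<Longrightarrow> \<exists>u v. is_pushout C i f u v \<and> inflation E v"
proof -
  have "\<forall>i f. inflation E i \<and> f \<in> cMor C \<and> src C f = src C i \<longrightarrow>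
        (\<exists>u v. is_pushout C i f u v \<and> inflation E v)"
    using ex unfolding exact_category_def by (elim conjE) assumption
  then show "inflation E i \<Longrightarrow> f \<in> cMor C \<Longrightarrow> src C f = src C i \<Longrightarrow> \<exists>u v. is_pushout C i f u v \<and> inflation E v"
    by blast
qed

lemma E2op: "deflation E p \<Longrightarrow> a \<in> cMor C \<Longrightarrow> tgt C a = tgt C p \<Longrightarrow> \<exists>d q. is_pullback C d q p a \<and> deflation E q"
proof -
  have "\<forall>p a. deflation E p \<and> a \<in> cMor C \<and> tgt C a = tgt C p \<longrightarrow>
        (\<exists>d q. is_pullback C d q p a \<and> deflation E q)"
    using ex unfolding exact_category_def by (elim conjE) assumption
  then show "deflation E p \<Longrightarrow> a \<in> cMor C \<Longrightarrow> tgt C a = tgt C p \<Longrightarrow> \<exists>d q. is_pullback C d q p a \<and> deflation E q"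
    by blast
qed

lemma PB:
  assumes mp: "(m,p) \<in> E" and a: "a \<in> H Zo (tgt C p)"
  shows "\<exists>m' p'. confl_pullback C E m p a m' p'"
proof -
  define A where "A = src C m"
  define T where "T = tgt C m"
  define D where "D = tgt C p"
  have m: "m \<in> H A T" using conf_i[OF mp] unfolding A_def T_def .
  have p: "p \<in> H T D" using conf_p[OF mp] unfolding D_def T_def .
  have pm: "p \<cdot> m = Z A D" using conf_zero[OF mp] unfolding A_def D_def .
  have a': "a \<in> H Zo D" using a unfolding D_def .
  have ob: "A \<in> Ob" "T \<in> Ob" "D \<in> Ob" "Zo \<in> Ob" using hom_obj[OF m] hom_obj[OF p] hom_obj[OF a'] by auto
  have "deflation E p" using mp unfolding deflation_def by auto
  then obtain d q where pb: "is_pullback C d q p a" and dq: "deflation E q"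
    using E2op[of p a] hmor[OF a] htgt[OF a] by auto
  obtain i where iq: "(i,q) \<in> E" using dq unfolding deflation_def by auto
  define W where "W = src C d"
  define K where "K = src C i"
  note dd = pb_data[OF pb]
  have d: "d \<in> H W T" using dd(1) dd(3) hsrc[OF p] unfolding W_def by (metis hsrc)
  have q: "q \<in> H W Zo" using dd(2) dd(4) hsrc[OF a'] unfolding W_def by (metis hsrc)
  have pdaq: "p \<cdot> d = a \<cdot> q" using dd(5) .
  have i: "i \<in> H K W" using conf_i[OF iq] conf_p[OF iq] q unfolding K_def by (metis hsrc)
  have qi: "q \<cdot> i = Z K Zo" using conf_zero[OF iq] q unfolding K_def by (metis htgt)
  have obK: "K \<in> Ob" "W \<in> Ob" using hom_obj[OF i] by auto
  have "p \<cdot> (d \<cdot> i) = (p \<cdot> d) \<cdot> i" using assoc[OF i d p] .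
  also have "\<dots> = a \<cdot> (q \<cdot> i)" using pdaq assoc[OF i q a'] by simp
  also have "\<dots> = Z K D" using qi zero_r[OF a' obK(1)] by simp
  finally have "p \<cdot> (d \<cdot> i) = Z K D" .
  then obtain g where g: "g \<in> H K A" and mg: "m \<cdot> g = d \<cdot> i"
    using conf_kfac[OF mp, of "d \<cdot> i" K] comp_hom[OF i d] unfolding A_def T_def D_def by auto
  have z: "Z A Zo \<in> H A Zo" using ob by auto
  have "p \<cdot> m = a \<cdot> Z A Zo" using pm zero_r[OF a' ob(1)] by simp
  then obtain w where w: "w \<in> H A W" and dw: "d \<cdot> w = m" and qw: "q \<cdot> w = Z A Zo"
    using pb_ex[OF pb, of m A "Z A Zo"] m z htgt[OF d] htgt[OF q] hsrc[OF d] unfolding W_def by auto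
  obtain k where k: "k \<in> H A K" and ik: "i \<cdot> k = w"
    using conf_kfac[OF iq, of w A] w qw htgt[OF i] htgt[OF q] unfolding K_def by auto
  have "m \<cdot> (g \<cdot> k) = (m \<cdot> g) \<cdot> k" using assoc[OF k g m] .
  also have "\<dots> = d \<cdot> (i \<cdot> k)" using mg assoc[OF k i d] by simp
  also have "\<dots> = m \<cdot> ident C A" using ik dw id_r[OF m] by simp
  finally have gk: "g \<cdot> k = ident C A"
    using conf_mono[OF mp comp_hom[OF k g, unfolded A_def] id_hom[OF ob(1), unfolded A_def]] unfolding A_def by simp
  have wg: "w \<in> H A W" "w \<cdot> g \<in> H K W" using w comp_hom[OF g w] by auto
  have "d \<cdot> (w \<cdot> g) = d \<cdot> i" using assoc[OF g w d] dw mg by simp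
  moreover have "q \<cdot> (w \<cdot> g) = q \<cdot> i" using assoc[OF g w q] qw zero_l[OF g ob(4)] qi by simp
  ultimately have wgi: "w \<cdot> g = i" using pb_uniq[OF pb, of "w \<cdot> g" K i] wg(2) i unfolding W_def by auto
  have "i \<cdot> (k \<cdot> g) = i \<cdot> ident C K" using assoc[OF g k i] ik wgi id_r[OF i] by simp
  then have kg: "k \<cdot> g = ident C K"
    using conf_mono[OF iq comp_hom[OF g k, unfolded K_def] id_hom[OF obK(1), unfolded K_def]] unfolding K_def by simp
  have isok: "iso C k" using isoI[OF k g gk kg] .
  have f1: "k \<in> H A (src C i)" using k unfolding K_def .
  have f2: "ident C W \<in> H W (tgt C i)" using id_hom[OF obK(2)] htgt[OF i] by simp
  have f3: "ident C Zo \<in> H Zo (tgt C q)" using id_hom[OF ob(4)] htgt[OF q] by simp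
  have "(w, q) \<in> E"
    using E_iso[OF iq w q f1 f2 f3 isok iso_id[OF obK(2)] iso_id[OF ob(4)]] id_l[OF w] id_l[OF q] id_r[OF q] ik
    by simp
  then show ?thesis unfolding confl_pullback_def
    using hsrc[OF w] htgt[OF q] hsrc[OF a'] htgt[OF w] pb dw d unfolding A_def T_def
    by (intro exI[of _ w] exI[of _ q]) auto
qed

end

context ec
begin

lemma PO:
  assumes mp: "(m,p) \<in> E" and b: "b \<in> H (src C m) Y"
  shows "\<exists>m' p'. confl_pushout C E m p b m' p'"
proof -
  define A where "A = src C m"
  define T where "T = tgt C m"
  define D where "D = tgt C p"
  have m: "m \<in> H A T" using conf_i[OF mp] unfolding A_def T_def .
  have p: "p \<in> H T D" using conf_p[OF mp] unfolding D_def T_def .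
  have pm: "p \<cdot> m = Z A D" using conf_zero[OF mp] unfolding A_def D_def .
  have b': "b \<in> H A Y" using b unfolding A_def .
  have ob: "A \<in> Ob" "T \<in> Ob" "D \<in> Ob" "Y \<in> Ob" using hom_obj[OF m] hom_obj[OF p] hom_obj[OF b'] by auto
  have "inflation E m" using mp unfolding inflation_def by auto
  then obtain u v where po: "is_pushout C m b u v" and iv: "inflation E v"
    using E2[of m b] hmor[OF b] hsrc[OF b] by auto
  obtain r where vr: "(v,r) \<in> E" using iv unfolding inflation_def by auto
  define P where "P = tgt C u"
  define R where "R = tgt C r"
  note dd = po_data[OF po]
  have u: "u \<in> H T P" using dd(3) unfolding P_def T_def .
  have v: "v \<in> H Y P" using dd(4) htgt[OF b] unfolding P_def by simp
  have umvb: "u \<cdot> m = v \<cdot> b" using dd(5) .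
  have r: "r \<in> H P R" using conf_p[OF vr] htgt[OF v] unfolding R_def by simp
  have rv: "r \<cdot> v = Z Y R" using conf_zero[OF vr] hsrc[OF v] unfolding R_def by simp
  have obR: "P \<in> Ob" "R \<in> Ob" using hom_obj[OF r] by auto
  have "(r \<cdot> u) \<cdot> m = r \<cdot> (u \<cdot> m)" using assoc[OF m u r] by simp
  also have "\<dots> = (r \<cdot> v) \<cdot> b" using umvb assoc[OF b' v r] by simp
  also have "\<dots> = Z A R" using rv zero_l[OF b' obR(2)] by simp
  finally have "(r \<cdot> u) \<cdot> m = Z A R" .
  then obtain h where h: "h \<in> H D R" and hp: "h \<cdot> p = r \<cdot> u"
    using conf_cfac[OF mp, of "r \<cdot> u" R] comp_hom[OF u r] unfolding A_def T_def D_def by auto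
  have zYD: "Z Y D \<in> H Y D" using ob by auto
  have "p \<cdot> m = Z Y D \<cdot> b" using pm zero_l[OF b' ob(3)] by simp
  then obtain w where w: "w \<in> H P D" and wu: "w \<cdot> u = p" and wv: "w \<cdot> v = Z Y D"
    using po_ex[OF po, of p D "Z Y D"] p zYD htgt[OF m] htgt[OF b'] unfolding P_def T_def by auto
  obtain k where k: "k \<in> H R D" and kr: "k \<cdot> r = w"
    using conf_cfac[OF vr, of w D] w wv htgt[OF v] hsrc[OF v] unfolding R_def by auto
  have "(k \<cdot> h) \<cdot> p = ident C D \<cdot> p"
    using assoc[OF p h k] hp assoc[OF u r k] kr wu id_l[OF p] by simp
  then have kh: "k \<cdot> h = ident C D"
    using conf_epi[OF mp comp_hom[OF h k, unfolded D_def] id_hom[OF ob(3), unfolded D_def]] unfolding D_def by simp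
  have hw: "h \<cdot> w \<in> H P R" using comp_hom[OF w h] .
  have "(h \<cdot> w) \<cdot> u = r \<cdot> u" using assoc[OF u w h] wu hp by simp
  moreover have "(h \<cdot> w) \<cdot> v = r \<cdot> v" using assoc[OF v w h] wv zero_r[OF h ob(4)] rv by simp
  ultimately have hwr: "h \<cdot> w = r" using po_uniq[OF po, of "h \<cdot> w" R r] hw r unfolding P_def by auto
  have "(h \<cdot> k) \<cdot> r = ident C R \<cdot> r" using assoc[OF r k h] kr hwr id_l[OF r] by simp
  then have hk: "h \<cdot> k = ident C R"
    using conf_epi[OF vr comp_hom[OF k h, unfolded R_def] id_hom[OF obR(2), unfolded R_def]] unfolding R_def by simp
  have isoh: "iso C h" using isoI[OF h k kh hk] .
  have f1: "ident C Y \<in> H Y (src C v)" using id_hom[OF ob(4)] hsrc[OF v] by simp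
  have f2: "ident C P \<in> H P (tgt C v)" using id_hom[OF obR(1)] htgt[OF v] by simp
  have f3: "h \<in> H D (tgt C r)" using h unfolding R_def .
  have "(v, w) \<in> E"
    using E_iso[OF vr v w f1 f2 f3 iso_id[OF ob(4)] iso_id[OF obR(1)] isoh] id_l[OF v] id_r[OF v] hwr id_r[OF r]
    by simp
  then show ?thesis unfolding confl_pushout_def
    using hsrc[OF v] htgt[OF w] htgt[OF b'] po wu u htgt[OF v] unfolding T_def D_def
    by (intro exI[of _ v] exI[of _ w]) auto
qed

end

context ec
begin

definition bip where
  "bip S A1 A2 j1 j2 r1 r2 \<longleftrightarrow> S \<in> Ob \<and> j1 \<in> H A1 S \<and> j2 \<in> H A2 S \<and> r1 \<in> H S A1 \<and> r2 \<in> H S A2 \<and>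
     r1 \<cdot> j1 = ident C A1 \<and> r2 \<cdot> j2 = ident C A2 \<and> r2 \<cdot> j1 = Z A1 A2 \<and> r1 \<cdot> j2 = Z A2 A1 \<and>
     j1 \<cdot> r1 \<oplus> j2 \<cdot> r2 = ident C S"

lemma bip_ex: assumes "A1 \<in> Ob" "A2 \<in> Ob" shows "\<exists>S j1 j2 r1 r2. bip S A1 A2 j1 j2 r1 r2"
proof -
  have "\<forall>A\<in>cObj C. \<forall>B\<in>cObj C. \<exists>S i1 i2 p1 p2.
        S \<in> cObj C \<and> i1 \<in> Hom C A S \<and> i2 \<in> Hom C B S \<and> p1 \<in> Hom C S A \<and> p2 \<in> Hom C S B \<and>
        cmp C p1 i1 = ident C A \<and> cmp C p2 i2 = ident C B \<and>
        cmp C p2 i1 = mzero C A B \<and> cmp C p1 i2 = mzero C B A \<and>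
        madd C (cmp C i1 p1) (cmp C i2 p2) = ident C S"
    using addi unfolding additive_def by (elim conjE) assumption
  from bspec[OF bspec[OF this assms(1)] assms(2)] show ?thesis unfolding bip_def .
qed

lemma bipD: assumes "bip S A1 A2 j1 j2 r1 r2"
  shows "S \<in> Ob" "j1 \<in> H A1 S" "j2 \<in> H A2 S" "r1 \<in> H S A1" "r2 \<in> H S A2"
     "r1 \<cdot> j1 = ident C A1" "r2 \<cdot> j2 = ident C A2" "r2 \<cdot> j1 = Z A1 A2" "r1 \<cdot> j2 = Z A2 A1"
     "j1 \<cdot> r1 \<oplus> j2 \<cdot> r2 = ident C S"
  using assms unfolding bip_def by simp_all

lemma bip_ext: assumes bp: "bip S A1 A2 j1 j2 r1 r2" and x: "x \<in> H S T" and y: "y \<in> H S T"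
  and e1: "x \<cdot> j1 = y \<cdot> j1" and e2: "x \<cdot> j2 = y \<cdot> j2"
  shows "x = y"
proof -
  note b = bipD[OF bp]
  have "x = x \<cdot> (j1 \<cdot> r1 \<oplus> j2 \<cdot> r2)" using b(10) id_r[OF x] by simp
  also have "\<dots> = x \<cdot> (j1 \<cdot> r1) \<oplus> x \<cdot> (j2 \<cdot> r2)"
    using distl[OF comp_hom[OF b(4) b(2)] comp_hom[OF b(5) b(3)] x] .
  also have "\<dots> = (x \<cdot> j1) \<cdot> r1 \<oplus> (x \<cdot> j2) \<cdot> r2" using assoc[OF b(4) b(2) x] assoc[OF b(5) b(3) x] by simp
  also have "\<dots> = (y \<cdot> j1) \<cdot> r1 \<oplus> (y \<cdot> j2) \<cdot> r2" using e1 e2 by simp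
  also have "\<dots> = y \<cdot> (j1 \<cdot> r1) \<oplus> y \<cdot> (j2 \<cdot> r2)" using assoc[OF b(4) b(2) y] assoc[OF b(5) b(3) y] by simp
  also have "\<dots> = y \<cdot> (j1 \<cdot> r1 \<oplus> j2 \<cdot> r2)"
    using distl[OF comp_hom[OF b(4) b(2)] comp_hom[OF b(5) b(3)] y] by simp
  also have "\<dots> = y" using b(10) id_r[OF y] by simp
  finally show ?thesis .
qed

lemma bip_copair: assumes bp: "bip S A1 A2 j1 j2 r1 r2" and g1: "g1 \<in> H A1 T" and g2: "g2 \<in> H A2 T"
  shows "g1 \<cdot> r1 \<oplus> g2 \<cdot> r2 \<in> H S T" "(g1 \<cdot> r1 \<oplus> g2 \<cdot> r2) \<cdot> j1 = g1" "(g1 \<cdot> r1 \<oplus> g2 \<cdot> r2) \<cdot> j2 = g2"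
proof -
  note b = bipD[OF bp]
  have h1: "g1 \<cdot> r1 \<in> H S T" using comp_hom[OF b(4) g1] .
  have h2: "g2 \<cdot> r2 \<in> H S T" using comp_hom[OF b(5) g2] .
  have ob: "A1 \<in> Ob" "A2 \<in> Ob" using hom_obj[OF g1] hom_obj[OF g2] by auto
  show "g1 \<cdot> r1 \<oplus> g2 \<cdot> r2 \<in> H S T" using add_hom[OF h1 h2] .
  have "(g1 \<cdot> r1 \<oplus> g2 \<cdot> r2) \<cdot> j1 = (g1 \<cdot> r1) \<cdot> j1 \<oplus> (g2 \<cdot> r2) \<cdot> j1" using distr[OF h1 h2 b(2)] .
  also have "\<dots> = g1 \<cdot> (r1 \<cdot> j1) \<oplus> g2 \<cdot> (r2 \<cdot> j1)" using assoc[OF b(2) b(4) g1] assoc[OF b(2) b(5) g2] by simp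
  also have "\<dots> = g1" using b(6) b(8) id_r[OF g1] zero_r[OF g2 ob(1)] add_zero[OF g1] by simp
  finally show "(g1 \<cdot> r1 \<oplus> g2 \<cdot> r2) \<cdot> j1 = g1" .
  have "(g1 \<cdot> r1 \<oplus> g2 \<cdot> r2) \<cdot> j2 = (g1 \<cdot> r1) \<cdot> j2 \<oplus> (g2 \<cdot> r2) \<cdot> j2" using distr[OF h1 h2 b(3)] .
  also have "\<dots> = g1 \<cdot> (r1 \<cdot> j2) \<oplus> g2 \<cdot> (r2 \<cdot> j2)" using assoc[OF b(3) b(4) g1] assoc[OF b(3) b(5) g2] by simp
  also have "\<dots> = g2" using b(7) b(9) id_r[OF g2] zero_r[OF g1 ob(2)] zero_add[OF g2] by simp
  finally show "(g1 \<cdot> r1 \<oplus> g2 \<cdot> r2) \<cdot> j2 = g2" .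
qed

lemma po_sym: "is_pushout C f g u v \<Longrightarrow> is_pushout C g f v u"
  unfolding is_pushout_def by (elim conjE) (intro conjI; (assumption | metis))

lemma po_iso: assumes po: "is_pushout C f g u v" and po': "is_pushout C f g u' v'"
  shows "\<exists>\<phi> \<in> H (tgt C u') (tgt C u). \<exists>\<psi> \<in> H (tgt C u) (tgt C u').
     \<phi> \<cdot> u' = u \<and> \<phi> \<cdot> v' = v \<and> \<psi> \<cdot> u = u' \<and> \<psi> \<cdot> v = v' \<and>
     \<psi> \<cdot> \<phi> = ident C (tgt C u') \<and> \<phi> \<cdot> \<psi> = ident C (tgt C u)"
proof -
  note d = po_data[OF po] and d' = po_data[OF po']
  have v: "v \<in> H (tgt C g) (tgt C u)" and v': "v' \<in> H (tgt C g) (tgt C u')" using d(4) d'(4) .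
  obtain \<phi> where \<phi>: "\<phi> \<in> H (tgt C u') (tgt C u)" "\<phi> \<cdot> u' = u" "\<phi> \<cdot> v' = v"
    using po_ex[OF po' d(3) v d(5)] by auto
  obtain \<psi> where \<psi>: "\<psi> \<in> H (tgt C u) (tgt C u')" "\<psi> \<cdot> u = u'" "\<psi> \<cdot> v = v'"
    using po_ex[OF po d'(3) v' d'(5)] by auto
  have ob: "tgt C u \<in> Ob" "tgt C u' \<in> Ob" using hom_obj[OF \<phi>(1)] by auto
  have "\<psi> \<cdot> \<phi> = ident C (tgt C u')"
    using po_uniq[OF po' comp_hom[OF \<phi>(1) \<psi>(1)] id_hom[OF ob(2)]]
      assoc[OF d'(3) \<phi>(1) \<psi>(1)] assoc[OF v' \<phi>(1) \<psi>(1)] \<phi> \<psi> id_l[OF d'(3)] id_l[OF v'] by simp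
  moreover have "\<phi> \<cdot> \<psi> = ident C (tgt C u)"
    using po_uniq[OF po comp_hom[OF \<psi>(1) \<phi>(1)] id_hom[OF ob(1)]]
      assoc[OF d(3) \<psi>(1) \<phi>(1)] assoc[OF v \<psi>(1) \<phi>(1)] \<phi> \<psi> id_l[OF d(3)] id_l[OF v] by simp
  ultimately show ?thesis using \<phi> \<psi> by blast
qed

lemma infl_po: assumes mq: "(m,q) \<in> E" and po: "is_pushout C m g u v"
  shows "\<exists>r. (v, r) \<in> E"
proof -
  note d = po_data[OF po]
  have "inflation E m" using mq unfolding inflation_def by auto
  then obtain u' v' where po': "is_pushout C m g u' v'" and iv: "inflation E v'"
    using E2[of m g] hmor[OF d(2)] hsrc[OF d(2)] by auto
  obtain r' where vr: "(v', r') \<in> E" using iv unfolding inflation_def by auto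
  note d' = po_data[OF po']
  obtain \<phi> \<psi> where \<phi>: "\<phi> \<in> H (tgt C u') (tgt C u)" and \<psi>: "\<psi> \<in> H (tgt C u) (tgt C u')"
    and e: "\<phi> \<cdot> u' = u" "\<phi> \<cdot> v' = v" "\<psi> \<cdot> u = u'" "\<psi> \<cdot> v = v'"
     "\<psi> \<cdot> \<phi> = ident C (tgt C u')" "\<phi> \<cdot> \<psi> = ident C (tgt C u)"
    using po_iso[OF po po'] by blast
  have v: "v \<in> H (tgt C g) (tgt C u)" and v': "v' \<in> H (tgt C g) (tgt C u')" using d(4) d'(4) .
  have r': "r' \<in> H (tgt C u') (tgt C r')" using conf_p[OF vr] htgt[OF v'] by simp
  have ob: "tgt C g \<in> Ob" "tgt C r' \<in> Ob" using hom_obj[OF v] hom_obj[OF r'] by auto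
  have f1: "ident C (tgt C g) \<in> H (tgt C g) (src C v')" using id_hom[OF ob(1)] hsrc[OF v'] by simp
  have f2: "\<psi> \<in> H (tgt C u) (tgt C v')" using \<psi> htgt[OF v'] by simp
  have f3: "ident C (tgt C r') \<in> H (tgt C r') (tgt C r')" using id_hom[OF ob(2)] .
  have iso\<psi>: "iso C \<psi>" using isoI[OF \<psi> \<phi> e(6) e(5)] .
  have "(v, r' \<cdot> \<psi>) \<in> E"
    using E_iso[OF vr v comp_hom[OF \<psi> r'] f1 f2 f3 iso_id[OF ob(1)] iso\<psi> iso_id[OF ob(2)]]
      e(4) id_r[OF v'] id_l[OF comp_hom[OF \<psi> r']] by simp
  then show ?thesis by blast
qed

end

context ec
begin

lemma LL:
  assumes e1: "(m1,q1) \<in> E" and e2: "(m2,q2) \<in> E" and po: "is_pushout C m1 m2 n1 n2"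
    and bp: "bip S (tgt C q1) (tgt C q2) j1 j2 r1 r2"
  shows "\<exists>q \<in> H (tgt C n1) S. (n1 \<cdot> m1, q) \<in> E \<and> q \<cdot> n1 = j1 \<cdot> q1 \<and> q \<cdot> n2 = j2 \<cdot> q2"
proof -
  note b = bipD[OF bp]
  note d = po_data[OF po]
  define B where "B = src C m1"
  define C1 where "C1 = tgt C m1"
  define C2 where "C2 = tgt C m2"
  define A1 where "A1 = tgt C q1"
  define A2 where "A2 = tgt C q2"
  define P where "P = tgt C n1"
  have m1: "m1 \<in> H B C1" using conf_i[OF e1] unfolding B_def C1_def .
  have m2: "m2 \<in> H B C2" using conf_i[OF e2] d(2) hsrc unfolding B_def C2_def by metis
  have q1: "q1 \<in> H C1 A1" using conf_p[OF e1] unfolding C1_def A1_def .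
  have q2: "q2 \<in> H C2 A2" using conf_p[OF e2] unfolding C2_def A2_def .
  have q1m1: "q1 \<cdot> m1 = Z B A1" using conf_zero[OF e1] unfolding B_def A1_def .
  have q2m2: "q2 \<cdot> m2 = Z B A2" using conf_zero[OF e2] hsrc[OF m2] unfolding A2_def by simp
  have n1: "n1 \<in> H C1 P" using d(3) unfolding C1_def P_def .
  have n2: "n2 \<in> H C2 P" using d(4) unfolding C2_def P_def .
  have nm: "n1 \<cdot> m1 = n2 \<cdot> m2" using d(5) .
  have j1: "j1 \<in> H A1 S" and j2: "j2 \<in> H A2 S" and r1: "r1 \<in> H S A1" and r2: "r2 \<in> H S A2"
    using b unfolding A1_def A2_def by auto
  have obS: "S \<in> Ob" "B \<in> Ob" "P \<in> Ob" using b(1) hom_obj[OF m1] hom_obj[OF n1] by auto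
  have y: "j1 \<cdot> q1 \<in> H C1 S" using comp_hom[OF q1 j1] .
  have z: "j2 \<cdot> q2 \<in> H C2 S" using comp_hom[OF q2 j2] .
  have yz1: "(j1 \<cdot> q1) \<cdot> m1 = Z B S" using assoc[OF m1 q1 j1] q1m1 zero_r[OF j1 obS(2)] by simp
  have yz2: "(j2 \<cdot> q2) \<cdot> m2 = Z B S" using assoc[OF m2 q2 j2] q2m2 zero_r[OF j2 obS(2)] by simp
  obtain q where q: "q \<in> H P S" and qn1: "q \<cdot> n1 = j1 \<cdot> q1" and qn2: "q \<cdot> n2 = j2 \<cdot> q2"
    using po_ex[OF po, of "j1 \<cdot> q1" S "j2 \<cdot> q2"] y z yz1 yz2 unfolding P_def C1_def C2_def by auto
  obtain r where nr: "(n1, r) \<in> E" using infl_po[OF e2 po_sym[OF po]] by blast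
  have i1: "inflation E m1" using e1 unfolding inflation_def by blast
  have i2: "inflation E n1" using nr unfolding inflation_def by blast
  have "inflation E (n1 \<cdot> m1)" using E1[OF i1 i2] hsrc[OF n1] unfolding C1_def by simp
  then obtain s where es: "(n1 \<cdot> m1, s) \<in> E" unfolding inflation_def by blast
  have nm1: "n1 \<cdot> m1 \<in> H B P" using comp_hom[OF m1 n1] .
  define X where "X = tgt C s"
  have s: "s \<in> H P X" using conf_p[OF es] htgt[OF nm1] unfolding X_def by simp
  have snm: "s \<cdot> (n1 \<cdot> m1) = Z B X" using conf_zero[OF es] hsrc[OF nm1] unfolding X_def by simp
  have obX: "X \<in> Ob" using hom_obj[OF s] by auto
  have "(s \<cdot> n1) \<cdot> m1 = Z B X" using assoc[OF m1 n1 s] snm by simp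
  then obtain g1 where g1: "g1 \<in> H A1 X" and g1q: "g1 \<cdot> q1 = s \<cdot> n1"
    using conf_cfac[OF e1, of "s \<cdot> n1" X] comp_hom[OF n1 s] unfolding C1_def B_def A1_def by auto
  have "(s \<cdot> n2) \<cdot> m2 = Z B X" using assoc[OF m2 n2 s] snm nm by simp
  then obtain g2 where g2: "g2 \<in> H A2 X" and g2q: "g2 \<cdot> q2 = s \<cdot> n2"
    using conf_cfac[OF e2, of "s \<cdot> n2" X] comp_hom[OF n2 s] hsrc[OF m2] unfolding C2_def A2_def by auto
  define h where "h = g1 \<cdot> r1 \<oplus> g2 \<cdot> r2"
  note cp = bip_copair[OF bp g1[unfolded A1_def] g2[unfolded A2_def], folded h_def]
  have h: "h \<in> H S X" using cp(1) .
  have "(h \<cdot> q) \<cdot> n1 = s \<cdot> n1" using assoc[OF n1 q h] qn1 assoc[OF q1 j1 h] cp(2) g1q by simp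
  moreover have "(h \<cdot> q) \<cdot> n2 = s \<cdot> n2" using assoc[OF n2 q h] qn2 assoc[OF q2 j2 h] cp(3) g2q by simp
  ultimately have hq: "h \<cdot> q = s" using po_uniq[OF po, of "h \<cdot> q" X s] comp_hom[OF q h] s unfolding P_def by auto
  have "q \<cdot> (n1 \<cdot> m1) = Z B S" using assoc[OF m1 n1 q] qn1 yz1 by simp
  then obtain k where k: "k \<in> H X S" and ks: "k \<cdot> s = q"
    using conf_cfac[OF es, of q S] q htgt[OF nm1] hsrc[OF nm1] unfolding X_def by auto
  have kh: "k \<cdot> h = ident C S"
  proof (rule bip_ext[OF bp comp_hom[OF h k] id_hom[OF b(1)]])
    have khq: "(k \<cdot> h) \<cdot> q = q" using assoc[OF q h k] hq ks by simp
    have "((k \<cdot> h) \<cdot> j1) \<cdot> q1 = (k \<cdot> h) \<cdot> (j1 \<cdot> q1)" using assoc[OF q1 j1 comp_hom[OF h k]] by simp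
    also have "\<dots> = (k \<cdot> h) \<cdot> (q \<cdot> n1)" using qn1 by simp
    also have "\<dots> = ((k \<cdot> h) \<cdot> q) \<cdot> n1" using assoc[OF n1 q comp_hom[OF h k]] .
    also have "\<dots> = j1 \<cdot> q1" using khq qn1 by simp
    also have "\<dots> = (ident C S \<cdot> j1) \<cdot> q1" using id_l[OF j1] by simp
    finally have "((k \<cdot> h) \<cdot> j1) \<cdot> q1 = (ident C S \<cdot> j1) \<cdot> q1" .
    then show "(k \<cdot> h) \<cdot> j1 = ident C S \<cdot> j1"
      using conf_epi[OF e1, of "(k \<cdot> h) \<cdot> j1" S "ident C S \<cdot> j1"] comp_hom[OF j1 comp_hom[OF h k]]
        comp_hom[OF j1 id_hom[OF b(1)]] unfolding A1_def by simp
    have "((k \<cdot> h) \<cdot> j2) \<cdot> q2 = (k \<cdot> h) \<cdot> (j2 \<cdot> q2)" using assoc[OF q2 j2 comp_hom[OF h k]] by simp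
    also have "\<dots> = (k \<cdot> h) \<cdot> (q \<cdot> n2)" using qn2 by simp
    also have "\<dots> = ((k \<cdot> h) \<cdot> q) \<cdot> n2" using assoc[OF n2 q comp_hom[OF h k]] .
    also have "\<dots> = j2 \<cdot> q2" using khq qn2 by simp
    also have "\<dots> = (ident C S \<cdot> j2) \<cdot> q2" using id_l[OF j2] by simp
    finally have "((k \<cdot> h) \<cdot> j2) \<cdot> q2 = (ident C S \<cdot> j2) \<cdot> q2" .
    then show "(k \<cdot> h) \<cdot> j2 = ident C S \<cdot> j2"
      using conf_epi[OF e2, of "(k \<cdot> h) \<cdot> j2" S "ident C S \<cdot> j2"] comp_hom[OF j2 comp_hom[OF h k]]
        comp_hom[OF j2 id_hom[OF b(1)]] unfolding A2_def by simp
  qed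
  have "(h \<cdot> k) \<cdot> s = ident C X \<cdot> s" using assoc[OF s k h] ks hq id_l[OF s] by simp
  then have hk: "h \<cdot> k = ident C X"
    using conf_epi[OF es comp_hom[OF k h, unfolded X_def] id_hom[OF obX, unfolded X_def]] unfolding X_def by simp
  have isoh: "iso C h" using isoI[OF h k kh hk] .
  have f1: "ident C B \<in> H B (src C (n1 \<cdot> m1))" using id_hom[OF obS(2)] hsrc[OF nm1] by simp
  have f2: "ident C P \<in> H P (tgt C (n1 \<cdot> m1))" using id_hom[OF obS(3)] htgt[OF nm1] by simp
  have f3: "h \<in> H S (tgt C s)" using h unfolding X_def .
  have "(n1 \<cdot> m1, q) \<in> E"
    using E_iso[OF es nm1 q f1 f2 f3 iso_id[OF obS(2)] iso_id[OF obS(3)] isoh]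
      id_l[OF nm1] id_r[OF nm1] hq id_r[OF s] by simp
  then show ?thesis using q qn1 qn2 unfolding P_def by blast
qed

end

context ec
begin

lemma M1:
  assumes mp: "(m,p) \<in> E" and f: "f \<in> H (src C m) Y" and a: "a \<in> H S (tgt C p)"
    and po1: "confl_pushout C E m p f m1 p1" and pb1: "confl_pullback C E m1 p1 a m2 p2"
    and \<iota>': "\<iota>' \<in> H A1' (tgt C p)" and \<iota>: "\<iota> \<in> H A1 S" and a1: "a1 \<in> H A1 A1'"
    and comm: "a \<cdot> \<iota> = \<iota>' \<cdot> a1" and orth: "ext_orth C E a1 f"
  shows "\<exists>\<sigma> \<in> H A1 (tgt C m2). p2 \<cdot> \<sigma> = \<iota>"
proof -
  define X where "X = src C m"
  define T where "T = tgt C m"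
  define S' where "S' = tgt C p"
  have m: "m \<in> H X T" using conf_i[OF mp] unfolding X_def T_def .
  have p: "p \<in> H T S'" using conf_p[OF mp] unfolding S'_def T_def .
  have f': "f \<in> H X Y" using f unfolding X_def .
  obtain c where e1: "(m1,p1) \<in> E" and sm1: "src C m1 = tgt C f" and tp1: "tgt C p1 = tgt C p"
    and c: "c \<in> H (tgt C m) (tgt C m1)" and po: "is_pushout C m f c m1" and p1c: "p1 \<cdot> c = p"
    using po1 unfolding confl_pushout_def by blast
  obtain d where e2: "(m2,p2) \<in> E" and sm2: "src C m2 = src C m1" and tp2: "tgt C p2 = src C a"
    and d: "d \<in> H (tgt C m2) (tgt C m1)" and pb: "is_pullback C d p2 p1 a" and dm2: "d \<cdot> m2 = m1"
    using pb1 unfolding confl_pullback_def by blast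
  define T1 where "T1 = tgt C m1"
  define W where "W = tgt C m2"
  have m1: "m1 \<in> H Y T1" using conf_i[OF e1] sm1 htgt[OF f'] unfolding T1_def by simp
  have p1: "p1 \<in> H T1 S'" using conf_p[OF e1] tp1 unfolding T1_def S'_def by simp
  have p1m1: "p1 \<cdot> m1 = Z Y S'" using conf_zero[OF e1] sm1 tp1 htgt[OF f'] unfolding S'_def by simp
  have c': "c \<in> H T T1" using c unfolding T_def T1_def .
  have d': "d \<in> H W T1" using d unfolding W_def T1_def .
  have p2: "p2 \<in> H W S" using conf_p[OF e2] tp2 hsrc[OF a] unfolding W_def by simp
  have cmm1f: "c \<cdot> m = m1 \<cdot> f" using po_data(5)[OF po] .
  obtain m' p' where cpb: "confl_pullback C E m p \<iota>' m' p'" using PB[OF mp \<iota>'] by blast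
  then obtain d1 where e3: "(m',p') \<in> E" and sm': "src C m' = src C m" and tp': "tgt C p' = src C \<iota>'"
    and d1: "d1 \<in> H (tgt C m') (tgt C m)" and pbi: "is_pullback C d1 p' p \<iota>'" and d1m': "d1 \<cdot> m' = m"
    unfolding confl_pullback_def by blast
  define T' where "T' = tgt C m'"
  have d1': "d1 \<in> H T' T" using d1 unfolding T'_def T_def .
  have p': "p' \<in> H T' A1'" using conf_p[OF e3] tp' hsrc[OF \<iota>'] unfolding T'_def by simp
  have pd1: "p \<cdot> d1 = \<iota>' \<cdot> p'" using pb_data(5)[OF pbi] .
  have fm': "f \<in> H (src C m') Y" using f sm' by simp
  obtain m1' p1' where cpo: "confl_pushout C E m' p' f m1' p1'" using PO[OF e3 fm'] by blast
  then obtain c1 where e4: "(m1',p1') \<in> E" and sm1': "src C m1' = tgt C f" and tp1': "tgt C p1' = tgt C p'"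
    and c1: "c1 \<in> H (tgt C m') (tgt C m1')" and po': "is_pushout C m' f c1 m1'" and p1c1: "p1' \<cdot> c1 = p'"
    unfolding confl_pushout_def by blast
  define T1' where "T1' = tgt C m1'"
  have c1': "c1 \<in> H T' T1'" using c1 unfolding T'_def T1'_def .
  have m1': "m1' \<in> H Y T1'" using conf_i[OF e4] sm1' htgt[OF f'] unfolding T1'_def by simp
  have p1': "p1' \<in> H T1' A1'" using conf_p[OF e4] tp1' htgt[OF p'] unfolding T1'_def by simp
  have p1m1': "p1' \<cdot> m1' = Z Y A1'" using conf_zero[OF e4] hsrc[OF m1'] htgt[OF p1'] by simp
  have a1': "a1 \<in> H A1 (tgt C p1')" using a1 htgt[OF p1'] by simp
  obtain m2' p2' where cpb2: "confl_pullback C E m1' p1' a1 m2' p2'" using PB[OF e4 a1'] by blast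
  then obtain d2 where e5: "(m2',p2') \<in> E" and tp2': "tgt C p2' = src C a1"
    and d2: "d2 \<in> H (tgt C m2') (tgt C m1')" and pb2: "is_pullback C d2 p2' p1' a1"
    unfolding confl_pullback_def by blast
  define W' where "W' = tgt C m2'"
  have d2': "d2 \<in> H W' T1'" using d2 unfolding W'_def T1'_def .
  have p2': "p2' \<in> H W' A1" using conf_p[OF e5] tp2' hsrc[OF a1] unfolding W'_def by simp
  have p1d2: "p1' \<cdot> d2 = a1 \<cdot> p2'" using pb_data(5)[OF pb2] .
  have "split_confl C m2' p2'"
    using orth e3 sm' hsrc[OF f] tp' hsrc[OF \<iota>'] htgt[OF a1] cpo cpb2 unfolding ext_orth_def by metis
  then obtain \<sigma> where \<sigma>: "\<sigma> \<in> H (tgt C p2') (tgt C m2')" and p2\<sigma>: "p2' \<cdot> \<sigma> = ident C (tgt C p2')"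
    using section_of_split[OF e5] by blast
  have \<sigma>': "\<sigma> \<in> H A1 W'" using \<sigma> htgt[OF p2'] unfolding W'_def by simp
  have p2\<sigma>': "p2' \<cdot> \<sigma> = ident C A1" using p2\<sigma> htgt[OF p2'] by simp
  have y: "c \<cdot> d1 \<in> H T' T1" using comp_hom[OF d1' c'] .
  have "(c \<cdot> d1) \<cdot> m' = m1 \<cdot> f" using assoc[OF conf_i[OF e3] d1 c, unfolded T'_def[symmetric]] d1m' cmm1f
    unfolding T'_def by (simp add: assoc[OF conf_i[OF e3] d1 c])
  then obtain k where k: "k \<in> H T1' T1" and kc1: "k \<cdot> c1 = c \<cdot> d1" and km1': "k \<cdot> m1' = m1"
    using po_ex[OF po', of "c \<cdot> d1" T1 m1] y m1 htgt[OF f'] htgt[OF c1'] unfolding T'_def T1'_def by auto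
  have obs: "Y \<in> Ob" "S' \<in> Ob" "A1' \<in> Ob" using hom_obj[OF m1] hom_obj[OF p1] hom_obj[OF p'] by auto
  have "(p1 \<cdot> k) \<cdot> c1 = (\<iota>' \<cdot> p1') \<cdot> c1"
  proof -
    have "(p1 \<cdot> k) \<cdot> c1 = p1 \<cdot> (c \<cdot> d1)" using assoc[OF c1' k p1] kc1 by simp
    also have "\<dots> = (p1 \<cdot> c) \<cdot> d1" using assoc[OF d1' c' p1] .
    also have "\<dots> = \<iota>' \<cdot> p'" using p1c pd1 by simp
    also have "\<dots> = (\<iota>' \<cdot> p1') \<cdot> c1" using assoc[OF c1' p1' \<iota>'[unfolded S'_def[symmetric]]] p1c1 by simp
    finally show ?thesis .
  qed
  moreover have "(p1 \<cdot> k) \<cdot> m1' = (\<iota>' \<cdot> p1') \<cdot> m1'"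
  proof -
    have "(p1 \<cdot> k) \<cdot> m1' = Z Y S'" using assoc[OF m1' k p1] km1' p1m1 by simp
    also have "\<dots> = (\<iota>' \<cdot> p1') \<cdot> m1'"
      using assoc[OF m1' p1' \<iota>'[unfolded S'_def[symmetric]]] p1m1' zero_r[OF \<iota>'[unfolded S'_def[symmetric]] obs(1)] by simp
    finally show ?thesis .
  qed
  ultimately have p1k: "p1 \<cdot> k = \<iota>' \<cdot> p1'"
    using po_uniq[OF po', of "p1 \<cdot> k" S' "\<iota>' \<cdot> p1'"] comp_hom[OF k p1] comp_hom[OF p1' \<iota>'[unfolded S'_def[symmetric]]]
      htgt[OF c1'] unfolding T1'_def by simp
  have "p1 \<cdot> (k \<cdot> d2) = a \<cdot> (\<iota> \<cdot> p2')"
  proof -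
    have "p1 \<cdot> (k \<cdot> d2) = (\<iota>' \<cdot> p1') \<cdot> d2" using assoc[OF d2' k p1] p1k by simp
    also have "\<dots> = \<iota>' \<cdot> (a1 \<cdot> p2')" using assoc[OF d2' p1' \<iota>'[unfolded S'_def[symmetric]]] p1d2 by simp
    also have "\<dots> = (a \<cdot> \<iota>) \<cdot> p2'" using assoc[OF p2' a1 \<iota>'[unfolded S'_def[symmetric]]] comm by simp
    also have "\<dots> = a \<cdot> (\<iota> \<cdot> p2')" using assoc[OF p2' \<iota> a] by simp
    finally show ?thesis .
  qed
  then obtain t where t: "t \<in> H W' (src C d)" and p2t: "p2 \<cdot> t = \<iota> \<cdot> p2'"
    using pb_ex[OF pb, of "k \<cdot> d2" W' "\<iota> \<cdot> p2'"] comp_hom[OF d2' k] comp_hom[OF p2' \<iota>] htgt[OF d'] htgt[OF p2]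
    by auto
  have t': "t \<in> H W' W" using t hsrc[OF d'] by simp
  have "p2 \<cdot> (t \<cdot> \<sigma>) = \<iota>" using assoc[OF \<sigma>' t' p2] p2t assoc[OF \<sigma>' p2' \<iota>] p2\<sigma>' id_r[OF \<iota>] by simp
  then show ?thesis using comp_hom[OF \<sigma>' t'] unfolding W_def by blast
qed

lemma M:
  assumes bp: "bip S A1 A2 j1 j2 r1 r2" and bp': "bip S' A1' A2' j1' j2' r1' r2'"
    and a1: "a1 \<in> H A1 A1'" and a2: "a2 \<in> H A2 A2'" and a: "a \<in> H S S'"
    and c1: "a \<cdot> j1 = j1' \<cdot> a1" and c2: "a \<cdot> j2 = j2' \<cdot> a2"
    and o1: "ext_orth C E a1 f" and o2: "ext_orth C E a2 f"
  shows "ext_orth C E a f"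
  unfolding ext_orth_def
proof (intro conjI allI impI)
  note b = bipD[OF bp] and b' = bipD[OF bp']
  show "a \<in> cMor C" using hmor[OF a] .
  show fm: "f \<in> cMor C" using o1 unfolding ext_orth_def by blast
  fix m p m1 p1 m2 p2
  assume H: "(m, p) \<in> E \<and> src C m = src C f \<and> tgt C p = tgt C a \<and>
       confl_pushout C E m p f m1 p1 \<and> confl_pullback C E m1 p1 a m2 p2"
  then have mp: "(m,p) \<in> E" and sm: "src C m = src C f" and tp: "tgt C p = S'"
    and po1: "confl_pushout C E m p f m1 p1" and pb1: "confl_pullback C E m1 p1 a m2 p2"
    using htgt[OF a] by auto
  have f: "f \<in> H (src C m) (tgt C f)" using homI[OF fm] sm by simp
  have a': "a \<in> H S (tgt C p)" using a tp by simp
  have j1': "j1' \<in> H A1' (tgt C p)" and j2': "j2' \<in> H A2' (tgt C p)" using b'(2) b'(3) tp by auto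
  obtain \<sigma>1 where \<sigma>1: "\<sigma>1 \<in> H A1 (tgt C m2)" and p\<sigma>1: "p2 \<cdot> \<sigma>1 = j1"
    using M1[OF mp f a' po1 pb1 j1' b(2) a1 c1 o1] by blast
  obtain \<sigma>2 where \<sigma>2: "\<sigma>2 \<in> H A2 (tgt C m2)" and p\<sigma>2: "p2 \<cdot> \<sigma>2 = j2"
    using M1[OF mp f a' po1 pb1 j2' b(3) a2 c2 o2] by blast
  define s where "s = \<sigma>1 \<cdot> r1 \<oplus> \<sigma>2 \<cdot> r2"
  note cp = bip_copair[OF bp \<sigma>1 \<sigma>2, folded s_def]
  obtain d where e2: "(m2,p2) \<in> E" and tp2: "tgt C p2 = src C a"
    using pb1 unfolding confl_pullback_def by blast
  have p2: "p2 \<in> H (tgt C m2) S" using conf_p[OF e2] tp2 hsrc[OF a] by simp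
  have ps: "p2 \<cdot> s = ident C S"
  proof (rule bip_ext[OF bp comp_hom[OF cp(1) p2] id_hom[OF b(1)]])
    show "(p2 \<cdot> s) \<cdot> j1 = ident C S \<cdot> j1" using assoc[OF b(2) cp(1) p2] cp(2) p\<sigma>1 id_l[OF b(2)] by simp
    show "(p2 \<cdot> s) \<cdot> j2 = ident C S \<cdot> j2" using assoc[OF b(3) cp(1) p2] cp(3) p\<sigma>2 id_l[OF b(3)] by simp
  qed
  show "split_confl C m2 p2"
    using split_of_section[OF e2, of s] cp(1) ps tp2 hsrc[OF a] by simp
qed

end

context ec
begin

lemma ideal_comp: "ideal C J \<Longrightarrow> f \<in> J \<Longrightarrow> g \<in> cMor C \<Longrightarrow> tgt C f = src C g \<Longrightarrow> g \<cdot> f \<in> J"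
  unfolding ideal_def by blast

lemma ideal_sub: "ideal C J \<Longrightarrow> J \<subseteq> cMor C"
  unfolding ideal_def by blast

lemma main3:
  assumes I1: "ideal C J1" and I2: "ideal C J2"
    and sp1: "special_preenvelope C E J1 B m1" and sp2: "special_preenvelope C E J2 B m2"
    and po: "is_pushout C m1 m2 n1 n2"
  shows "special_preenvelope C E (J1 \<inter> J2) B (n1 \<cdot> m1)"
proof -
  obtain q01 i1 q1 c1 a1 where B: "B \<in> Ob" and m1J: "m1 \<in> J1" and sm1: "src C m1 = B"
    and e01: "(m1, q01) \<in> E" and e1: "(i1, q1) \<in> E" and si1: "src C i1 = B"
    and c1: "c1 \<in> H (tgt C m1) (tgt C i1)" and a1: "a1 \<in> H (tgt C q01) (tgt C q1)"
    and c1m1: "c1 \<cdot> m1 = i1 \<cdot> ident C B" and q1c1: "q1 \<cdot> c1 = a1 \<cdot> q01" and a1p: "a1 \<in> perp_ideal C E J1"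
    using sp1 unfolding special_preenvelope_def by blast
  obtain q02 i2 q2 c2 a2 where m2J: "m2 \<in> J2" and sm2: "src C m2 = B"
    and e02: "(m2, q02) \<in> E" and e2: "(i2, q2) \<in> E" and si2: "src C i2 = B"
    and c2: "c2 \<in> H (tgt C m2) (tgt C i2)" and a2: "a2 \<in> H (tgt C q02) (tgt C q2)"
    and c2m2: "c2 \<cdot> m2 = i2 \<cdot> ident C B" and q2c2: "q2 \<cdot> c2 = a2 \<cdot> q02" and a2p: "a2 \<in> perp_ideal C E J2"
    using sp2 unfolding special_preenvelope_def by blast
  note pd = po_data[OF po]
  have m1: "m1 \<in> H B (tgt C m1)" using conf_i[OF e01] sm1 by simp
  have m2: "m2 \<in> H B (tgt C m2)" using conf_i[OF e02] sm2 by simp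
  have i1: "i1 \<in> H B (tgt C i1)" using conf_i[OF e1] si1 by simp
  have i2: "i2 \<in> H B (tgt C i2)" using conf_i[OF e2] si2 by simp
  have q01: "q01 \<in> H (tgt C m1) (tgt C q01)" using conf_p[OF e01] .
  have q02: "q02 \<in> H (tgt C m2) (tgt C q02)" using conf_p[OF e02] .
  have q1: "q1 \<in> H (tgt C i1) (tgt C q1)" using conf_p[OF e1] .
  have q2: "q2 \<in> H (tgt C i2) (tgt C q2)" using conf_p[OF e2] .
  have n1: "n1 \<in> H (tgt C m1) (tgt C n1)" using pd(3) .
  have n2: "n2 \<in> H (tgt C m2) (tgt C n1)" using pd(4) .
  have ob: "tgt C q01 \<in> Ob" "tgt C q02 \<in> Ob" "tgt C q1 \<in> Ob" "tgt C q2 \<in> Ob"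
    using hom_obj[OF q01] hom_obj[OF q02] hom_obj[OF q1] hom_obj[OF q2] by auto
  obtain S j1 j2 r1 r2 where bp: "bip S (tgt C q01) (tgt C q02) j1 j2 r1 r2" using bip_ex[OF ob(1) ob(2)] by blast
  obtain S' j1' j2' r1' r2' where bp': "bip S' (tgt C q1) (tgt C q2) j1' j2' r1' r2'" using bip_ex[OF ob(3) ob(4)] by blast
  note b = bipD[OF bp] and b' = bipD[OF bp']
  obtain q where q: "q \<in> H (tgt C n1) S" and eq: "(n1 \<cdot> m1, q) \<in> E" and qn1: "q \<cdot> n1 = j1 \<cdot> q01"
    and qn2: "q \<cdot> n2 = j2 \<cdot> q02"
    using LL[OF e01 e02 po bp] by blast
  have "inflation E i1" using e1 unfolding inflation_def by blast
  then obtain u v where po': "is_pushout C i1 i2 u v" using E2[of i1 i2] hmor[OF i2] si1 si2 by blast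
  note pd' = po_data[OF po']
  have u: "u \<in> H (tgt C i1) (tgt C u)" using pd'(3) .
  have v: "v \<in> H (tgt C i2) (tgt C u)" using pd'(4) .
  obtain q' where q': "q' \<in> H (tgt C u) S'" and eq': "(u \<cdot> i1, q') \<in> E" and q'u: "q' \<cdot> u = j1' \<cdot> q1"
    and q'v: "q' \<cdot> v = j2' \<cdot> q2"
    using LL[OF e1 e2 po' bp'] by blast
  have uc1: "u \<cdot> c1 \<in> H (tgt C m1) (tgt C u)" using comp_hom[OF c1 u] .
  have vc2: "v \<cdot> c2 \<in> H (tgt C m2) (tgt C u)" using comp_hom[OF c2 v] .
  have uc1m1: "(u \<cdot> c1) \<cdot> m1 = u \<cdot> i1" using assoc[OF m1 c1 u] c1m1 id_r[OF i1] by simp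
  have vc2m2: "(v \<cdot> c2) \<cdot> m2 = v \<cdot> i2" using assoc[OF m2 c2 v] c2m2 id_r[OF i2] by simp
  have "(u \<cdot> c1) \<cdot> m1 = (v \<cdot> c2) \<cdot> m2" using uc1m1 vc2m2 pd'(5) by simp
  then obtain c where c: "c \<in> H (tgt C n1) (tgt C u)" and cn1: "c \<cdot> n1 = u \<cdot> c1" and cn2: "c \<cdot> n2 = v \<cdot> c2"
    using po_ex[OF po uc1 vc2] by blast
  have a1': "a1 \<in> H (tgt C q01) (tgt C q1)" using a1 .
  have g1: "j1' \<cdot> a1 \<in> H (tgt C q01) S'" using comp_hom[OF a1 b'(2)] .
  have g2: "j2' \<cdot> a2 \<in> H (tgt C q02) S'" using comp_hom[OF a2 b'(3)] .
  define a where "a = (j1' \<cdot> a1) \<cdot> r1 \<oplus> (j2' \<cdot> a2) \<cdot> r2"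
  note cp = bip_copair[OF bp g1 g2, folded a_def]
  have a: "a \<in> H S S'" using cp(1) .
  have ap: "a \<in> perp_ideal C E (J1 \<inter> J2)"
    unfolding perp_ideal_def
  proof (intro CollectI conjI ballI)
    show "a \<in> cMor C" using hmor[OF a] .
    fix f assume f: "f \<in> J1 \<inter> J2"
    have o1: "ext_orth C E a1 f" using a1p f unfolding perp_ideal_def by blast
    have o2: "ext_orth C E a2 f" using a2p f unfolding perp_ideal_def by blast
    show "ext_orth C E a f" using M[OF bp bp' a1 a2 a cp(2) cp(3) o1 o2] .
  qed
  have nm1: "n1 \<cdot> m1 \<in> H B (tgt C n1)" using comp_hom[OF m1 n1] .
  have ui1: "u \<cdot> i1 \<in> H B (tgt C u)" using comp_hom[OF i1 u] .
  have comm1: "c \<cdot> (n1 \<cdot> m1) = (u \<cdot> i1) \<cdot> ident C B"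
    using assoc[OF m1 n1 c] cn1 uc1m1 id_r[OF ui1] by simp
  have "(q' \<cdot> c) \<cdot> n1 = (a \<cdot> q) \<cdot> n1"
  proof -
    have "(q' \<cdot> c) \<cdot> n1 = q' \<cdot> (u \<cdot> c1)" using assoc[OF n1 c q'] cn1 by simp
    also have "\<dots> = (j1' \<cdot> q1) \<cdot> c1" using assoc[OF c1 u q'] q'u by simp
    also have "\<dots> = j1' \<cdot> (a1 \<cdot> q01)" using assoc[OF c1 q1 b'(2)] q1c1 by simp
    also have "\<dots> = (a \<cdot> j1) \<cdot> q01" using assoc[OF q01 a1 b'(2)] cp(2) by simp
    also have "\<dots> = a \<cdot> (q \<cdot> n1)" using assoc[OF q01 b(2) a] qn1 by simp
    also have "\<dots> = (a \<cdot> q) \<cdot> n1" using assoc[OF n1 q a] .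
    finally show ?thesis .
  qed
  moreover have "(q' \<cdot> c) \<cdot> n2 = (a \<cdot> q) \<cdot> n2"
  proof -
    have "(q' \<cdot> c) \<cdot> n2 = q' \<cdot> (v \<cdot> c2)" using assoc[OF n2 c q'] cn2 by simp
    also have "\<dots> = (j2' \<cdot> q2) \<cdot> c2" using assoc[OF c2 v q'] q'v by simp
    also have "\<dots> = j2' \<cdot> (a2 \<cdot> q02)" using assoc[OF c2 q2 b'(3)] q2c2 by simp
    also have "\<dots> = (a \<cdot> j2) \<cdot> q02" using assoc[OF q02 a2 b'(3)] cp(3) by simp
    also have "\<dots> = a \<cdot> (q \<cdot> n2)" using assoc[OF q02 b(3) a] qn2 by simp
    also have "\<dots> = (a \<cdot> q) \<cdot> n2" using assoc[OF n2 q a] .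
    finally show ?thesis .
  qed
  ultimately have comm2: "q' \<cdot> c = a \<cdot> q"
    using po_uniq[OF po comp_hom[OF c q'] comp_hom[OF q a]] by simp
  have J1: "n1 \<cdot> m1 \<in> J1" using ideal_comp[OF I1 m1J hmor[OF n1]] hsrc[OF n1] htgt[OF m1] by simp
  have J2: "n1 \<cdot> m1 \<in> J2" using ideal_comp[OF I2 m2J hmor[OF n2]] hsrc[OF n2] htgt[OF m2] pd(5) by simp
  have c': "c \<in> H (tgt C (n1 \<cdot> m1)) (tgt C (u \<cdot> i1))" using c htgt[OF nm1] htgt[OF ui1] by simp
  have a': "a \<in> H (tgt C q) (tgt C q')" using a htgt[OF q] htgt[OF q'] by simp
  show ?thesis unfolding special_preenvelope_def
    using B J1 J2 hsrc[OF nm1] eq eq' hsrc[OF ui1] c' a' comm1 comm2 ap by blast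
qed

end

lemma ideal_int: assumes "ideal C J1" "ideal C J2" shows "ideal C (J1 \<inter> J2)"
proof -
  have a: "J1 \<subseteq> cMor C" "J2 \<subseteq> cMor C" using assms unfolding ideal_def by blast+
  have b: "\<forall>A\<in>cObj C. \<forall>B\<in>cObj C. mzero C A B \<in> J1 \<and>
        (\<forall>f\<in>J1 \<inter> Hom C A B. mneg C f \<in> J1 \<and> (\<forall>g\<in>J1 \<inter> Hom C A B. madd C f g \<in> J1))"
    using assms(1) unfolding ideal_def by (elim conjE) assumption
  have b2: "\<forall>A\<in>cObj C. \<forall>B\<in>cObj C. mzero C A B \<in> J2 \<and>
        (\<forall>f\<in>J2 \<inter> Hom C A B. mneg C f \<in> J2 \<and> (\<forall>g\<in>J2 \<inter> Hom C A B. madd C f g \<in> J2))"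
    using assms(2) unfolding ideal_def by (elim conjE) assumption
  have c: "\<forall>f\<in>J1. \<forall>g\<in>cMor C. (tgt C f = src C g \<longrightarrow> cmp C g f \<in> J1) \<and>
                         (src C f = tgt C g \<longrightarrow> cmp C f g \<in> J1)"
    using assms(1) unfolding ideal_def by (elim conjE) assumption
  have c2: "\<forall>f\<in>J2. \<forall>g\<in>cMor C. (tgt C f = src C g \<longrightarrow> cmp C g f \<in> J2) \<and>
                         (src C f = tgt C g \<longrightarrow> cmp C f g \<in> J2)"
    using assms(2) unfolding ideal_def by (elim conjE) assumption
  show ?thesis unfolding ideal_def
  proof (intro conjI ballI impI)
    show "J1 \<inter> J2 \<subseteq> cMor C" using a by blast
  next
    fix A B assume AB: "A \<in> cObj C" "B \<in> cObj C"
    show "mzero C A B \<in> J1 \<inter> J2" using bspec[OF bspec[OF b AB(1)] AB(2)] bspec[OF bspec[OF b2 AB(1)] AB(2)] by blast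
  next
    fix A B f assume AB: "A \<in> cObj C" "B \<in> cObj C" and f: "f \<in> J1 \<inter> J2 \<inter> Hom C A B"
    show "mneg C f \<in> J1 \<inter> J2" using bspec[OF bspec[OF b AB(1)] AB(2)] bspec[OF bspec[OF b2 AB(1)] AB(2)] f by blast
  next
    fix A B f g assume AB: "A \<in> cObj C" "B \<in> cObj C" and f: "f \<in> J1 \<inter> J2 \<inter> Hom C A B"
      and g: "g \<in> J1 \<inter> J2 \<inter> Hom C A B"
    show "madd C f g \<in> J1 \<inter> J2" using bspec[OF bspec[OF b AB(1)] AB(2)] bspec[OF bspec[OF b2 AB(1)] AB(2)] f g by blast
  next
    fix f g assume f: "f \<in> J1 \<inter> J2" and g: "g \<in> cMor C" and t: "tgt C f = src C g"
    show "cmp C g f \<in> J1 \<inter> J2" using c c2 f g t by blast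
  next
    fix f g assume f: "f \<in> J1 \<inter> J2" and g: "g \<in> cMor C" and t: "src C f = tgt C g"
    show "cmp C f g \<in> J1 \<inter> J2" using c c2 f g t by blast
  qed
qed

theorem theorem3p1:
  fixes C :: "('o, 'm) addcat" and E :: "('m \<times> 'm) set" and J1 J2 :: "'m set"
  assumes "exact_category C E"
    and "ideal C J1" and "ideal C J2"
    and "special_preenveloping C E J1" and "special_preenveloping C E J2"
  shows "ideal C (J1 \<inter> J2) \<and> special_preenveloping C E (J1 \<inter> J2) \<and>
    (\<forall>B m1 m2 n1 n2. special_preenvelope C E J1 B m1 \<and> special_preenvelope C E J2 B m2 \<and>
        is_pushout C m1 m2 n1 n2 \<longrightarrow>
        special_preenvelope C E (J1 \<inter> J2) B (cmp C n1 m1))"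
proof -
  interpret ec C E by (rule ec.intro) (rule assms(1))
  have P3: "\<forall>B m1 m2 n1 n2. special_preenvelope C E J1 B m1 \<and> special_preenvelope C E J2 B m2 \<and>
        is_pushout C m1 m2 n1 n2 \<longrightarrow>
        special_preenvelope C E (J1 \<inter> J2) B (cmp C n1 m1)"
    using main3[OF assms(2) assms(3)] by blast
  have SP: "special_preenveloping C E (J1 \<inter> J2)"
    unfolding special_preenveloping_def
  proof
    fix B assume B: "B \<in> cObj C"
    obtain m1 where sp1: "special_preenvelope C E J1 B m1" using assms(4) B unfolding special_preenveloping_def by blast
    obtain m2 where sp2: "special_preenvelope C E J2 B m2" using assms(5) B unfolding special_preenveloping_def by blast
    obtain q01 where e01: "(m1, q01) \<in> E" and sm1: "src C m1 = B"
      using sp1 unfolding special_preenvelope_def by blast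
    obtain q02 where e02: "(m2, q02) \<in> E" and sm2: "src C m2 = B"
      using sp2 unfolding special_preenvelope_def by blast
    have "inflation E m1" using e01 unfolding inflation_def by blast
    then obtain u v where po: "is_pushout C m1 m2 u v"
      using E2[of m1 m2] hmor[OF conf_i[OF e02]] sm1 sm2 by blast
    show "\<exists>j. special_preenvelope C E (J1 \<inter> J2) B j" using main3[OF assms(2) assms(3) sp1 sp2 po] by blast
  qed
  show ?thesis using ideal_int[OF assms(2) assms(3)] SP P3 by blast
qed

end
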